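(* For $n\ge 1$ let $Hk_n=\sum_{r=0}^{n-1}p_{(n-r,1^r)}$ (a Schur-positive symmetric function), and let $W_n$ be the $S_n$-module with Frobenius characteristic $Hk_n$. Then: (1) for $n\ge1$, the restriction $W_{n+1}\downarrow_{S_n}$ is isomorphic to $W_n\oplus\big(W_n\downarrow_{S_{n-1}}\big)\uparrow^{S_n}$; (2) for each $n\ge1$, $Conj_n$ equals the homogeneous degree-$n$ component of $(1-Lie)\cdot\sum_{k\ge1}Hk_k[Lie]$.
   Context: $p_\mu$ denotes power sums, and $f[g]$ denotes plethysm of symmetric functions. $Conj_n$ is the Frobenius characteristic of the action of $S_n$ by conjugation on the conjugacy class of $n$-cycles. $Lie_n$ is the $S_n$-module obtained by inducing a faithful linear character (a primitive $n$th root of unity) of the cyclic subgroup generated by an $n$-cycle up to $S_n$, and $Lie=\sum_{n\ge1}\mathrm{ch}\,Lie_n$, where $\mathrm{ch}$ denotes Frobenius characteristic. *)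

theory Defs
  imports Complex_Main "HOL-Combinatorics.Permutations" "HOL-Library.Multiset"
begin

text \<open>A (possibly infinite, graded-completed) symmetric function over the complex
numbers is represented by its family of coefficients in the power-sum basis:
f represents the formal sum over partitions lam of (f lam) * p_lam.
Partitions are multisets of positive naturals; the value at multisets
containing 0 is irrelevant (all functions below vanish there).\<close>

type_synonym sf = "nat multiset \<Rightarrow> complex"

definition is_partition :: "nat multiset \<Rightarrow> bool" where
  "is_partition lam \<longleftrightarrow> 0 \<notin># lam"

definition pw :: "nat multiset \<Rightarrow> sf" where
  "pw lam = (\<lambda>mu. if mu = lam then 1 else 0)"

definition sf_one :: sf where "sf_one = pw {#}"

definition sf_add :: "sf \<Rightarrow> sf \<Rightarrow> sf" where
  "sf_add f g = (\<lambda>mu. f mu + g mu)"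

definition sf_sub :: "sf \<Rightarrow> sf \<Rightarrow> sf" where
  "sf_sub f g = (\<lambda>mu. f mu - g mu)"

text \<open>product, using p_lam * p_mu = p_(lam + mu)\<close>
definition sf_mult :: "sf \<Rightarrow> sf \<Rightarrow> sf" where
  "sf_mult f g = (\<lambda>nu. \<Sum>lam\<in>{lam. lam \<subseteq># nu}. f lam * g (nu - lam))"

definition sf_prod_list :: "sf list \<Rightarrow> sf" where
  "sf_prod_list fs = foldr sf_mult fs sf_one"

definition deg_part :: "nat \<Rightarrow> sf \<Rightarrow> sf" where
  "deg_part n f = (\<lambda>lam. if sum_mset lam = n then f lam else 0)"

text \<open>p_k[g] = sum over mu of g(mu) p_(k mu) (p_k[g] replaces every p_i by p_(k i))\<close>
definition pleth_p :: "nat \<Rightarrow> sf \<Rightarrow> sf" where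
  "pleth_p k g = (\<lambda>mu. if 0 < k \<and> (\<forall>x\<in>#mu. k dvd x)
                        then g (image_mset (\<lambda>x. x div k) mu) else 0)"

text \<open>Plethysm f[g] = sum over lam of f(lam) * prod_i p_(lam_i)[g], for g without
constant term (then only partitions lam with |lam| <= |nu| contribute to the
coefficient of p_nu, so the sum below is the full, finite, sum).\<close>
definition plethysm :: "sf \<Rightarrow> sf \<Rightarrow> sf" where
  "plethysm f g = (\<lambda>nu. \<Sum>lam\<in>{lam. is_partition lam \<and> sum_mset lam \<le> sum_mset nu}.
       f lam * sf_prod_list (map (\<lambda>i. pleth_p i g) (sorted_list_of_multiset lam)) nu)"

text \<open>S_n acts on {0,...,n-1}; S_(n-1) \<subseteq> S_n as permutations fixing n-1.\<close>
definition Sym :: "nat \<Rightarrow> (nat \<Rightarrow> nat) set" where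
  "Sym n = {\<sigma>. \<sigma> permutes {..<n}}"

definition orb :: "(nat \<Rightarrow> nat) \<Rightarrow> nat \<Rightarrow> nat set" where
  "orb \<sigma> x = range (\<lambda>k. (\<sigma> ^^ k) x)"

definition cycle_type :: "nat \<Rightarrow> (nat \<Rightarrow> nat) \<Rightarrow> nat multiset" where
  "cycle_type n \<sigma> = image_mset card (mset_set {orb \<sigma> x | x. x < n})"

definition class_fun :: "nat \<Rightarrow> ((nat \<Rightarrow> nat) \<Rightarrow> complex) \<Rightarrow> bool" where
  "class_fun n \<chi> \<longleftrightarrow> (\<forall>\<sigma>\<in>Sym n. \<forall>\<tau>\<in>Sym n. \<chi> (\<tau> \<circ> \<sigma> \<circ> inv \<tau>) = \<chi> \<sigma>)"

definition frob :: "nat \<Rightarrow> ((nat \<Rightarrow> nat) \<Rightarrow> complex) \<Rightarrow> sf" where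
  "frob n \<chi> = (\<lambda>lam. (\<Sum>\<sigma>\<in>Sym n. if cycle_type n \<sigma> = lam then \<chi> \<sigma> else 0) / fact n)"

definition ind_char :: "(nat \<Rightarrow> nat) set \<Rightarrow> (nat \<Rightarrow> nat) set
      \<Rightarrow> ((nat \<Rightarrow> nat) \<Rightarrow> complex) \<Rightarrow> (nat \<Rightarrow> nat) \<Rightarrow> complex" where
  "ind_char G H \<chi> g = (\<Sum>x\<in>G. if x \<circ> g \<circ> inv x \<in> H then \<chi> (x \<circ> g \<circ> inv x) else 0) / card H"

definition cyc :: "nat \<Rightarrow> nat \<Rightarrow> nat" where
  "cyc n = (\<lambda>i. if i < n then Suc i mod n else i)"

definition cyc_grp :: "nat \<Rightarrow> (nat \<Rightarrow> nat) set" where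
  "cyc_grp n = {cyc n ^^ j | j. j < n}"

definition lin_char :: "nat \<Rightarrow> (nat \<Rightarrow> nat) \<Rightarrow> complex" where
  "lin_char n h = exp (2 * pi * \<i> / of_nat n) ^ (THE j. j < n \<and> h = cyc n ^^ j)"

definition lie_char :: "nat \<Rightarrow> (nat \<Rightarrow> nat) \<Rightarrow> complex" where
  "lie_char n = ind_char (Sym n) (cyc_grp n) (lin_char n)"

definition Lie :: sf where
  "Lie = (\<lambda>lam. \<Sum>n. frob (Suc n) (lie_char (Suc n)) lam)"

text \<open>character of the conjugation action of S_n on its n-cycles
(permutation character: number of fixed n-cycles)\<close>
definition conj_char :: "nat \<Rightarrow> (nat \<Rightarrow> nat) \<Rightarrow> complex" where
  "conj_char n \<sigma> = of_nat (card {\<tau>\<in>Sym n. cycle_type n \<tau> = {#n#} \<and> \<sigma> \<circ> \<tau> \<circ> inv \<sigma> = \<tau>})"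

definition Hk :: "nat \<Rightarrow> sf" where
  "Hk n = (\<lambda>lam. \<Sum>r<n. pw (add_mset (n - r) (replicate_mset r 1)) lam)"

end

theory Submission
  imports Defs "HOL-Combinatorics.Orbits" "HOL-Number_Theory.Totient"
begin

lemma Sym_permutes: "\<sigma> \<in> Sym n \<longleftrightarrow> \<sigma> permutes {..<n}" by (simp add: Sym_def)

lemma Sym_permutation: "\<sigma> \<in> Sym n \<Longrightarrow> permutation \<sigma>"
  unfolding Sym_permutes permutation_permutes by blast

lemma Sym_comp: "\<sigma> \<in> Sym n \<Longrightarrow> \<tau> \<in> Sym n \<Longrightarrow> \<sigma> \<circ> \<tau> \<in> Sym n"
  unfolding Sym_permutes by (rule permutes_compose)

lemma Sym_inv: "\<sigma> \<in> Sym n \<Longrightarrow> inv \<sigma> \<in> Sym n"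
  unfolding Sym_permutes by (rule permutes_inv)

lemma Sym_conj: "\<sigma> \<in> Sym n \<Longrightarrow> \<tau> \<in> Sym n \<Longrightarrow> \<tau> \<circ> \<sigma> \<circ> inv \<tau> \<in> Sym n"
  by (intro Sym_comp Sym_inv)

lemma Sym_out: "\<sigma> \<in> Sym n \<Longrightarrow> x \<ge> n \<Longrightarrow> \<sigma> x = x"
  unfolding Sym_permutes by (rule permutes_not_in) auto

lemma Sym_in: "\<sigma> \<in> Sym n \<Longrightarrow> x < n \<Longrightarrow> \<sigma> x < n"
  unfolding Sym_permutes using permutes_in_image by fastforce

lemma Sym_mono: "\<sigma> \<in> Sym n \<Longrightarrow> n \<le> m \<Longrightarrow> \<sigma> \<in> Sym m"
  unfolding Sym_permutes by (erule permutes_subset) auto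

lemma card_Sym: "card (Sym n) = fact n"
  unfolding Sym_def by (rule card_permutations) auto

lemma finite_Sym: "finite (Sym n)"
  using card_Sym by (metis card_eq_0_iff fact_nonzero)

lemma Sym_inv_apply: "\<sigma> \<in> Sym n \<Longrightarrow> \<sigma> (inv \<sigma> x) = x" "\<sigma> \<in> Sym n \<Longrightarrow> inv \<sigma> (\<sigma> x) = x"
  unfolding Sym_permutes by (auto simp: permutes_inverses)

lemma Sym_bij: "\<sigma> \<in> Sym n \<Longrightarrow> bij \<sigma>"
  unfolding Sym_permutes by (rule permutes_bij)

lemma Sym_inv_inv: "\<sigma> \<in> Sym n \<Longrightarrow> inv (inv \<sigma>) = \<sigma>"
  unfolding Sym_permutes by (rule permutes_inv_inv)

lemma Sym_id: "id \<in> Sym n" unfolding Sym_permutes by simp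

lemma orb_eq_orbit: "permutation \<sigma> \<Longrightarrow> orb \<sigma> x = orbit \<sigma> x"
  by (auto simp: orb_def orbit_altdef_permutation)

lemma orb_self: "x \<in> orb \<sigma> x"
  unfolding orb_def by (metis funpow_0 rangeI)

lemma orb_funpow: "(\<sigma> ^^ k) x \<in> orb \<sigma> x"
  unfolding orb_def by auto

lemma orb_step: "\<sigma> x \<in> orb \<sigma> x"
  using orb_funpow[where k=1 and \<sigma>=\<sigma> and x=x] by simp

lemma funpow_Sym_in: "\<sigma> \<in> Sym n \<Longrightarrow> x < n \<Longrightarrow> (\<sigma> ^^ k) x < n"
  by (induct k) (auto simp: Sym_in)

lemma funpow_Sym_out: "\<sigma> \<in> Sym n \<Longrightarrow> x \<ge> n \<Longrightarrow> (\<sigma> ^^ k) x = x"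
  by (induct k) (auto simp: Sym_out)

lemma orb_sub: "\<sigma> \<in> Sym n \<Longrightarrow> x < n \<Longrightarrow> orb \<sigma> x \<subseteq> {..<n}"
  unfolding orb_def using funpow_Sym_in by auto

lemma orb_finite: "permutation \<sigma> \<Longrightarrow> finite (orb \<sigma> x)"
  by (simp add: orb_eq_orbit finite_orbit permutation_self_in_orbit)

lemma orb_same: "permutation \<sigma> \<Longrightarrow> y \<in> orb \<sigma> x \<Longrightarrow> orb \<sigma> y = orb \<sigma> x"
  unfolding orb_eq_orbit by (metis cyclic_on_orbit' orbit_cyclic_eq3)

lemma orb_card_pos: "permutation \<sigma> \<Longrightarrow> card (orb \<sigma> x) > 0"
  using orb_finite orb_self by (metis card_gt_0_iff empty_iff)

lemma orb_period:
  assumes "permutation \<sigma>"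
  shows "(\<sigma> ^^ card (orb \<sigma> x)) x = x"
    and "(\<sigma> ^^ k) x = (\<sigma> ^^ l) x \<longleftrightarrow> k mod card (orb \<sigma> x) = l mod card (orb \<sigma> x)"
proof -
  define d where "d = funpow_dist1 \<sigma> x x"
  have xo: "x \<in> orbit \<sigma> x" using assms by (rule permutation_self_in_orbit)
  have o: "orbit \<sigma> x = (\<lambda>n. (\<sigma> ^^ n) x) ` {0..<d}"
    unfolding d_def by (rule orbit_conv_funpow_dist1[OF xo])
  have inj: "inj_on (\<lambda>n. (\<sigma> ^^ n) x) {0..<d}"
    unfolding d_def by (rule inj_on_funpow_dist1[OF xo])
  have c: "card (orb \<sigma> x) = d"
    using assms o inj by (simp add: orb_eq_orbit card_image)
  have dx: "(\<sigma> ^^ d) x = x" unfolding d_def by (rule funpow_dist1_prop[OF xo])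
  show "(\<sigma> ^^ card (orb \<sigma> x)) x = x" using c dx by simp
  have dpos: "d > 0" unfolding d_def by simp
  have "(\<sigma> ^^ k) x = (\<sigma> ^^ l) x \<longleftrightarrow> (\<sigma> ^^ (k mod d)) x = (\<sigma> ^^ (l mod d)) x"
    using funpow_mod_eq[where f=\<sigma> and n=d and x=x] dx by simp
  also have "\<dots> \<longleftrightarrow> k mod d = l mod d"
    using inj dpos by (auto simp: inj_on_def)
  finally show "(\<sigma> ^^ k) x = (\<sigma> ^^ l) x \<longleftrightarrow> k mod card (orb \<sigma> x) = l mod card (orb \<sigma> x)"
    using c by simp
qed

lemma orb_conj:
  assumes "\<sigma> \<in> Sym n" "\<tau> \<in> Sym n"
  shows "orb (\<tau> \<circ> \<sigma> \<circ> inv \<tau>) (\<tau> y) = \<tau> ` orb \<sigma> y"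
proof -
  have "((\<tau> \<circ> \<sigma> \<circ> inv \<tau>) ^^ k) (\<tau> y) = \<tau> ((\<sigma> ^^ k) y)" for k
    by (induct k) (auto simp: Sym_inv_apply[OF assms(2)])
  then show ?thesis unfolding orb_def by (auto simp: image_iff)
qed

definition orbs :: "nat \<Rightarrow> (nat \<Rightarrow> nat) \<Rightarrow> nat set set" where
  "orbs n \<sigma> = {orb \<sigma> x | x. x < n}"

lemma cycle_type_orbs: "cycle_type n \<sigma> = image_mset card (mset_set (orbs n \<sigma>))"
  by (simp add: cycle_type_def orbs_def)

lemma finite_orbs: "finite (orbs n \<sigma>)"
proof -
  have "orbs n \<sigma> = (orb \<sigma>) ` {..<n}" by (auto simp: orbs_def)
  then show ?thesis by simp
qed

lemma count_image_mset_set: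
  assumes "finite A"
  shows "count (image_mset f (mset_set A)) v = card {a\<in>A. f a = v}"
proof -
  have "count (image_mset f (mset_set A)) v = sum (count (mset_set A)) (f -` {v} \<inter> A)"
    using assms by (simp add: count_image_mset)
  also have "\<dots> = sum (\<lambda>_. 1) (f -` {v} \<inter> A)"
    using assms by (intro sum.cong) auto
  also have "\<dots> = card {a\<in>A. f a = v}"
    by (simp add: Int_def vimage_def conj_commute)
  finally show ?thesis .
qed

lemma cycle_type_conj:
  assumes "\<sigma> \<in> Sym n" "\<tau> \<in> Sym n"
  shows "cycle_type n (\<tau> \<circ> \<sigma> \<circ> inv \<tau>) = cycle_type n \<sigma>"
proof -
  have e: "orbs n (\<tau> \<circ> \<sigma> \<circ> inv \<tau>) = (\<lambda>A. \<tau> ` A) ` orbs n \<sigma>"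
  proof (intro set_eqI iffI)
    fix B assume "B \<in> orbs n (\<tau> \<circ> \<sigma> \<circ> inv \<tau>)"
    then obtain x where x: "x < n" "B = orb (\<tau> \<circ> \<sigma> \<circ> inv \<tau>) x" by (auto simp: orbs_def)
    have "x = \<tau> (inv \<tau> x)" using Sym_inv_apply[OF assms(2)] by simp
    then have "B = \<tau> ` orb \<sigma> (inv \<tau> x)" using x orb_conj[OF assms, of "inv \<tau> x"] by simp
    moreover have "inv \<tau> x < n" using Sym_in[OF Sym_inv[OF assms(2)] x(1)] .
    ultimately show "B \<in> (\<lambda>A. \<tau> ` A) ` orbs n \<sigma>" by (auto simp: orbs_def)
  next
    fix B assume "B \<in> (\<lambda>A. \<tau> ` A) ` orbs n \<sigma>"
    then obtain y where y: "y < n" "B = \<tau> ` orb \<sigma> y" by (auto simp: orbs_def)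
    then have "B = orb (\<tau> \<circ> \<sigma> \<circ> inv \<tau>) (\<tau> y)" using orb_conj[OF assms] by simp
    then show "B \<in> orbs n (\<tau> \<circ> \<sigma> \<circ> inv \<tau>)"
      using Sym_in[OF assms(2) y(1)] by (auto simp: orbs_def)
  qed
  have injt: "inj \<tau>" using Sym_bij[OF assms(2)] bij_is_inj by blast
  have inj: "inj_on (\<lambda>A. \<tau> ` A) (orbs n \<sigma>)"
    using injt by (auto simp: inj_on_def inj_image_eq_iff)
  show ?thesis
    unfolding cycle_type_orbs e
    using inj finite_orbs injt
    by (simp add: image_mset_mset_set[symmetric] multiset.map_comp o_def card_image inj_on_subset[OF injt])
qed

lemma cycle_type_count1:
  assumes "\<sigma> \<in> Sym n"
  shows "count (cycle_type n \<sigma>) 1 = card {i. i < n \<and> \<sigma> i = i}"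
proof -
  have p: "permutation \<sigma>" using Sym_permutation[OF assms] .
  have "count (cycle_type n \<sigma>) 1 = card {A \<in> orbs n \<sigma>. card A = 1}"
    unfolding cycle_type_orbs by (rule count_image_mset_set[OF finite_orbs])
  also have "{A \<in> orbs n \<sigma>. card A = 1} = (\<lambda>i. {i}) ` {i. i < n \<and> \<sigma> i = i}"
  proof (intro set_eqI iffI)
    fix A assume "A \<in> {A \<in> orbs n \<sigma>. card A = 1}"
    then obtain x where x: "x < n" "A = orb \<sigma> x" "card A = 1" by (auto simp: orbs_def)
    then have "A = {x}" using orb_self[of x \<sigma>] by (metis card_1_singletonE singletonD)
    then have "\<sigma> x = x" using x p orb_eq_orbit orbit_eq_singleton_iff by metis
    then show "A \<in> (\<lambda>i. {i}) ` {i. i < n \<and> \<sigma> i = i}" using \<open>A = {x}\<close> x by auto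
  next
    fix A assume "A \<in> (\<lambda>i. {i}) ` {i. i < n \<and> \<sigma> i = i}"
    then obtain x where x: "x < n" "\<sigma> x = x" "A = {x}" by auto
    then have "orb \<sigma> x = {x}" using p orb_eq_orbit orbit_eq_singleton_iff by metis
    then show "A \<in> {A \<in> orbs n \<sigma>. card A = 1}" using x by (auto simp: orbs_def)
  qed
  also have "card \<dots> = card {i. i < n \<and> \<sigma> i = i}"
    by (rule card_image) (auto simp: inj_on_def)
  finally show ?thesis .
qed

lemma cycle_type_Suc:
  assumes "\<sigma> \<in> Sym n"
  shows "cycle_type (Suc n) \<sigma> = add_mset 1 (cycle_type n \<sigma>)"
proof -
  have fx: "orb \<sigma> n = {n}"
    using Sym_permutation[OF assms] orb_eq_orbit orbit_eq_singleton_iff Sym_out[OF assms] by (metis le_refl)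
  have e: "orbs (Suc n) \<sigma> = insert {n} (orbs n \<sigma>)"
    unfolding orbs_def using fx by (auto simp: less_Suc_eq)
  have "{n} \<notin> orbs n \<sigma>"
    using orb_sub[OF assms] by (auto simp: orbs_def)
  then show ?thesis unfolding cycle_type_orbs e using finite_orbs by simp
qed

lemma mset_bij:
  assumes "finite A" "finite B" "image_mset f (mset_set A) = image_mset g (mset_set B)"
  shows "\<exists>\<beta>. bij_betw \<beta> A B \<and> (\<forall>a\<in>A. g (\<beta> a) = f a)"
  using assms
proof (induction A arbitrary: B rule: finite_induct)
  case empty
  then have "B = {}" by (metis image_mset_is_empty_iff mset_set_empty_iff)
  then show ?case by (auto simp: bij_betw_def)
next
  case (insert a A)
  from insert.prems(2) insert.hyps have e1: "add_mset (f a) (image_mset f (mset_set A)) = image_mset g (mset_set B)" by simp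
  then have "f a \<in># image_mset g (mset_set B)" by (metis union_single_eq_member)
  then obtain b where b: "b \<in> B" "g b = f a" using insert.prems(1) by auto
  have "mset_set B = add_mset b (mset_set (B - {b}))" using b insert.prems(1) by (simp add: mset_set.remove)
  with e1 b have "image_mset f (mset_set A) = image_mset g (mset_set (B - {b}))" by simp
  from insert.IH[OF _ this] obtain \<beta> where \<beta>: "bij_betw \<beta> A (B - {b})" "\<forall>a\<in>A. g (\<beta> a) = f a"
    using insert.prems(1) by auto
  define \<beta>' where "\<beta>' = \<beta>(a := b)"
  have 1: "bij_betw \<beta>' A (B - {b})" unfolding \<beta>'_def using \<beta>(1) insert.hyps(2)
    by (metis bij_betw_cong fun_upd_other)
  have 2: "bij_betw \<beta>' {a} {b}" unfolding \<beta>'_def by simp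
  have "bij_betw \<beta>' (A \<union> {a}) ((B - {b}) \<union> {b})" by (rule bij_betw_combine[OF 1 2]) auto
  moreover have "A \<union> {a} = insert a A" "(B - {b}) \<union> {b} = B" using b by auto
  ultimately have "bij_betw \<beta>' (insert a A) B" by simp
  moreover have "\<forall>x\<in>insert a A. g (\<beta>' x) = f x" using \<beta>(2) b insert.hyps(2) by (auto simp: \<beta>'_def)
  ultimately show ?case by blast
qed

theorem same_type_conj:
  assumes \<sigma>: "\<sigma> \<in> Sym n" and \<tau>: "\<tau> \<in> Sym n" and t: "cycle_type n \<sigma> = cycle_type n \<tau>"
  shows "\<exists>\<phi>\<in>Sym n. \<tau> = \<phi> \<circ> \<sigma> \<circ> inv \<phi>"
proof -
  have ps: "permutation \<sigma>" and pt: "permutation \<tau>" using Sym_permutation \<sigma> \<tau> by auto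
  obtain \<beta> where \<beta>: "bij_betw \<beta> (orbs n \<sigma>) (orbs n \<tau>)" "\<forall>A\<in>orbs n \<sigma>. card (\<beta> A) = card A"
    using mset_bij[OF finite_orbs finite_orbs t[unfolded cycle_type_orbs]] by blast
  define r :: "nat set \<Rightarrow> nat" where "r A = (SOME a. a \<in> A)" for A
  have r_orb: "A = orb \<rho> (r A)" "r A < n" if R: "\<rho> \<in> Sym n" and AR: "A \<in> orbs n \<rho>" for \<rho> A
  proof -
    obtain x where x: "x<n" "A = orb \<rho> x" using AR by (auto simp: orbs_def)
    have "r A \<in> A" unfolding r_def using orb_self x by (metis someI)
    then show "A = orb \<rho> (r A)" using orb_same[OF Sym_permutation[OF R]] x by metis
    show "r A < n" using \<open>r A \<in> A\<close> orb_sub[OF R x(1)] x by auto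
  qed
  have orbs_sub: "B \<subseteq> {..<n}" if "\<rho> \<in> Sym n" "B \<in> orbs n \<rho>" for \<rho> B
    using that orb_sub by (auto simp: orbs_def)
  define k where "k y = (SOME k. (\<sigma>^^k) (r (orb \<sigma> y)) = y)" for y
  have k: "(\<sigma>^^k y) (r (orb \<sigma> y)) = y" if "y<n" for y
  proof -
    have "orb \<sigma> y \<in> orbs n \<sigma>" using that by (auto simp: orbs_def)
    then have "y \<in> orb \<sigma> (r (orb \<sigma> y))" using r_orb[OF \<sigma>] orb_self by metis
    then have "\<exists>k. (\<sigma>^^k) (r (orb \<sigma> y)) = y" unfolding orb_def by (metis (mono_tags, lifting) imageE)
    then show ?thesis unfolding k_def by (rule someI_ex)
  qed
  define \<phi> where "\<phi> y = (if y < n then (\<tau>^^k y) (r (\<beta> (orb \<sigma> y))) else y)" for y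
  have A: "orb \<sigma> y \<in> orbs n \<sigma>" if "y < n" for y using that by (auto simp: orbs_def)
  have BA: "\<beta> (orb \<sigma> y) \<in> orbs n \<tau>" if "y < n" for y using \<beta>(1) A[OF that] by (auto simp: bij_betw_def)
  have c1: "card (orb \<sigma> (r (orb \<sigma> y))) = card (orb \<sigma> y)" if "y < n" for y
    using r_orb[OF \<sigma> A[OF that]] by simp
  have c2: "card (orb \<tau> (r (\<beta> (orb \<sigma> y)))) = card (orb \<sigma> y)" if "y < n" for y
    using r_orb[OF \<tau> BA[OF that]] \<beta>(2) A[OF that] by simp
  have key: "\<phi> y = (\<tau>^^j) (r (\<beta> (orb \<sigma> y)))" if "y<n" "(\<sigma>^^j) (r (orb \<sigma> y)) = y" for y j
  proof -
    have "(\<sigma>^^j) (r (orb \<sigma> y)) = (\<sigma>^^k y) (r (orb \<sigma> y))" using that k by simp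
    then have "j mod card (orb \<sigma> y) = k y mod card (orb \<sigma> y)" using orb_period(2)[OF ps] c1[OF that(1)] by metis
    then have "(\<tau>^^j) (r (\<beta> (orb \<sigma> y))) = (\<tau>^^k y) (r (\<beta> (orb \<sigma> y)))"
      using orb_period(2)[OF pt] c2[OF that(1)] by metis
    then show ?thesis using that by (simp add: \<phi>_def)
  qed
  have comm: "\<phi> (\<sigma> y) = \<tau> (\<phi> y)" for y
  proof (cases "y < n")
    case True
    have sy: "\<sigma> y < n" using Sym_in[OF \<sigma> True] .
    have o: "orb \<sigma> (\<sigma> y) = orb \<sigma> y" using orb_same[OF ps orb_step] .
    have "\<phi> (\<sigma> y) = (\<tau>^^Suc (k y)) (r (\<beta> (orb \<sigma> (\<sigma> y))))"
      by (rule key[OF sy]) (use k[OF True] o in simp)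
    then show ?thesis using True o by (simp add: \<phi>_def)
  next
    case False then show ?thesis by (simp add: \<phi>_def Sym_out[OF \<sigma>] Sym_out[OF \<tau>])
  qed
  have rB: "orb \<tau> (r (\<beta> (orb \<sigma> y))) = \<beta> (orb \<sigma> y)" if "y<n" for y
    using r_orb(1)[OF \<tau> BA[OF that]] by (rule sym)
  have inB': "\<phi> y \<in> orb \<tau> (r (\<beta> (orb \<sigma> y)))" if "y<n" for y
    using that orb_funpow by (simp add: \<phi>_def)
  have inB: "\<phi> y \<in> \<beta> (orb \<sigma> y)" if "y<n" for y
    using inB'[OF that] rB[OF that] by simp
  have inn: "\<phi> y < n" if "y<n" for y
    using inB[OF that] orbs_sub[OF \<tau> BA[OF that]] by auto
  have inj: "inj_on \<phi> {..<n}"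
  proof (rule inj_onI)
    fix y y' assume y: "y \<in> {..<n}" "y' \<in> {..<n}" "\<phi> y = \<phi> y'"
    then have yn: "y < n" "y' < n" by auto
    have e1: "\<beta> (orb \<sigma> y) = orb \<tau> (\<phi> y)"
      using orb_same[OF pt inB'[OF yn(1)]] rB[OF yn(1)] by simp
    have e2: "\<beta> (orb \<sigma> y') = orb \<tau> (\<phi> y')"
      using orb_same[OF pt inB'[OF yn(2)]] rB[OF yn(2)] by simp
    have "orb \<sigma> y = orb \<sigma> y'"
      using inj_onD[OF bij_betw_imp_inj_on[OF \<beta>(1)] _ A[OF yn(1)] A[OF yn(2)]] e1 e2 y(3) by simp
    then have "\<phi> y' = (\<tau>^^k y') (r (\<beta> (orb \<sigma> y)))" using yn by (simp add: \<phi>_def)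
    moreover have "\<phi> y = (\<tau>^^k y) (r (\<beta> (orb \<sigma> y)))" using yn by (simp add: \<phi>_def)
    ultimately have "k y mod card (orb \<sigma> y) = k y' mod card (orb \<sigma> y)"
      using y(3) orb_period(2)[OF pt, of "k y" "r (\<beta> (orb \<sigma> y))" "k y'"] c2[OF yn(1)] by simp
    then have s1: "(\<sigma>^^k y) (r (orb \<sigma> y)) = (\<sigma>^^k y') (r (orb \<sigma> y))"
      using orb_period(2)[OF ps, of "k y" "r (orb \<sigma> y)" "k y'"] c1[OF yn(1)] by simp
    have "y = (\<sigma>^^k y) (r (orb \<sigma> y))" by (rule k[OF yn(1), symmetric])
    also have "\<dots> = (\<sigma>^^k y') (r (orb \<sigma> y))" by (rule s1)
    also have "\<dots> = (\<sigma>^^k y') (r (orb \<sigma> y'))" by (simp only: \<open>orb \<sigma> y = orb \<sigma> y'\<close>)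
    also have "\<dots> = y'" by (rule k[OF yn(2)])
    finally show "y = y'" .
  qed
  have img: "\<phi> ` {..<n} = {..<n}"
    by (rule endo_inj_surj) (use inn inj in auto)
  have php: "\<phi> \<in> Sym n" unfolding Sym_permutes
  proof (rule bij_imp_permutes)
    show "bij_betw \<phi> {..<n} {..<n}" unfolding bij_betw_def using inj img by blast
  qed (simp add: \<phi>_def)
  have "\<phi> \<circ> \<sigma> = \<tau> \<circ> \<phi>" using comm by auto
  then have "\<phi> \<circ> \<sigma> \<circ> inv \<phi> = \<tau> \<circ> (\<phi> \<circ> inv \<phi>)" by (simp add: o_assoc)
  also have "\<phi> \<circ> inv \<phi> = id" using php unfolding Sym_permutes by (rule permutes_inv_o)
  finally have "\<tau> = \<phi> \<circ> \<sigma> \<circ> inv \<phi>" by (simp add: comp_def)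
  then show ?thesis using php by blast
qed

lemma card_filter_sum: "finite A \<Longrightarrow> card {x\<in>A. Q x} = (\<Sum>x\<in>A. if Q x then 1 else 0)"
  by (simp add: sum.If_cases Int_def conj_commute)

lemma card_fiber_sum:
  assumes "finite S" "finite I" "\<forall>x\<in>S. g x \<in> I"
  shows "card {x\<in>S. P (g x)} = (\<Sum>i\<in>{i\<in>I. P i}. card {x\<in>S. g x = i})"
proof -
  have "{x\<in>S. P (g x)} = (\<Union>i\<in>{i\<in>I. P i}. {x\<in>S. g x = i})" using assms(3) by auto
  moreover have "card (\<Union>i\<in>{i\<in>I. P i}. {x\<in>S. g x = i}) = (\<Sum>i\<in>{i\<in>I. P i}. card {x\<in>S. g x = i})"
    by (rule card_UN_disjoint) (use assms in auto)
  ultimately show ?thesis by simp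
qed

lemma class_fun_eq:
  assumes "class_fun n \<chi>" "\<sigma> \<in> Sym n" "\<tau> \<in> Sym n" "cycle_type n \<tau> = cycle_type n \<sigma>"
  shows "\<chi> \<tau> = \<chi> \<sigma>"
proof -
  obtain \<phi> where "\<phi> \<in> Sym n" "\<tau> = \<phi> \<circ> \<sigma> \<circ> inv \<phi>"
    using same_type_conj[OF assms(2,3) assms(4)[symmetric]] by blast
  then show ?thesis using assms(1,2) unfolding class_fun_def by blast
qed

definition ccard :: "nat \<Rightarrow> nat multiset \<Rightarrow> nat" where
  "ccard n lam = card {\<tau>\<in>Sym n. cycle_type n \<tau> = lam}"

lemma ccard_pos: "\<sigma> \<in> Sym n \<Longrightarrow> ccard n (cycle_type n \<sigma>) > 0"
  unfolding ccard_def using finite_Sym by (subst card_gt_0_iff) auto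

lemma frob_class_fun:
  assumes "class_fun n \<chi>" "\<sigma> \<in> Sym n"
  shows "frob n \<chi> (cycle_type n \<sigma>) = \<chi> \<sigma> * of_nat (ccard n (cycle_type n \<sigma>)) / fact n"
proof -
  have "(\<Sum>\<tau>\<in>Sym n. if cycle_type n \<tau> = cycle_type n \<sigma> then \<chi> \<tau> else 0)
      = (\<Sum>\<tau>\<in>{\<tau>\<in>Sym n. cycle_type n \<tau> = cycle_type n \<sigma>}. \<chi> \<tau>)"
    using finite_Sym by (simp add: sum.inter_filter)
  also have "\<dots> = (\<Sum>\<tau>\<in>{\<tau>\<in>Sym n. cycle_type n \<tau> = cycle_type n \<sigma>}. \<chi> \<sigma>)"
    using class_fun_eq[OF assms] by (intro sum.cong) auto
  also have "\<dots> = \<chi> \<sigma> * of_nat (ccard n (cycle_type n \<sigma>))" by (simp add: ccard_def)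
  finally show ?thesis by (simp add: frob_def)
qed

lemma class_fun_value:
  assumes "class_fun n \<chi>" "\<sigma> \<in> Sym n"
  shows "\<chi> \<sigma> = frob n \<chi> (cycle_type n \<sigma>) * fact n / of_nat (ccard n (cycle_type n \<sigma>))"
  using frob_class_fun[OF assms] ccard_pos[OF assms(2)] by (simp add: field_simps)

lemma Hk_Suc:
  assumes "n \<ge> 1"
  shows "Hk (Suc n) (add_mset 1 lam) = Hk n lam"
proof -
  have "Hk (Suc n) (add_mset 1 lam) = (\<Sum>r<Suc n. pw (add_mset (Suc n - r) (replicate_mset r 1)) (add_mset 1 lam))"
    by (simp add: Hk_def)
  also have "\<dots> = pw (add_mset (Suc n) {#}) (add_mset 1 lam) + (\<Sum>r<n. pw (add_mset (Suc n - Suc r) (replicate_mset (Suc r) 1)) (add_mset 1 lam))"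
    by (subst sum.lessThan_Suc_shift) simp
  also have "pw (add_mset (Suc n) {#}) (add_mset 1 lam) = 0"
    using assms by (auto simp: pw_def)
  also have "(\<Sum>r<n. pw (add_mset (Suc n - Suc r) (replicate_mset (Suc r) 1)) (add_mset 1 lam))
      = (\<Sum>r<n. pw (add_mset (n - r) (replicate_mset r 1)) lam)"
    by (intro sum.cong) (auto simp: pw_def add_mset_commute)
  finally show ?thesis by (simp add: Hk_def)
qed

lemma Sym_Suc_fix:
  assumes "\<tau> \<in> Sym (Suc n)" "\<tau> n = n"
  shows "\<tau> \<in> Sym n"
  using assms unfolding Sym_permutes permutes_def
  by (metis lessThan_iff less_Suc_eq)

lemma Sym_fix_iff: "\<tau> \<in> Sym (Suc n) \<Longrightarrow> \<tau> \<in> Sym n \<longleftrightarrow> \<tau> n = n"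
  using Sym_Suc_fix Sym_out by blast

lemma transpose_Sym: "i < n \<Longrightarrow> j < n \<Longrightarrow> transpose i j \<in> Sym n"
  unfolding Sym_permutes by (rule permutes_swap_id) auto

lemma perm_fiber_card:
  assumes "i < Suc m"
  shows "card {x\<in>Sym (Suc m). x i = m} = fact m"
proof -
  define t where "t = transpose i m"
  have t: "t \<in> Sym (Suc m)" unfolding t_def using assms by (intro transpose_Sym) auto
  have tt: "t \<circ> t = id" unfolding t_def by simp
  have "{x\<in>Sym (Suc m). x i = m} = (\<lambda>y. y \<circ> t) ` Sym m"
  proof (intro set_eqI iffI)
    fix x assume x: "x \<in> {x\<in>Sym (Suc m). x i = m}"
    define y where "y = x \<circ> t"
    have "y \<in> Sym (Suc m)" unfolding y_def using x t by (auto intro: Sym_comp)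
    moreover have "y m = m" using x by (simp add: y_def t_def)
    ultimately have "y \<in> Sym m" using Sym_Suc_fix by blast
    moreover have "x = y \<circ> t" unfolding y_def by (simp add: o_assoc[symmetric] tt)
    ultimately show "x \<in> (\<lambda>y. y \<circ> t) ` Sym m" by blast
  next
    fix x assume "x \<in> (\<lambda>y. y \<circ> t) ` Sym m"
    then obtain y where y: "y \<in> Sym m" "x = y \<circ> t" by blast
    have "x \<in> Sym (Suc m)" using y t Sym_mono[OF y(1)] by (auto intro: Sym_comp)
    moreover have "x i = m" using y Sym_out[OF y(1), of m] by (simp add: t_def)
    ultimately show "x \<in> {x\<in>Sym (Suc m). x i = m}" by blast
  qed
  moreover have "inj_on (\<lambda>y. y \<circ> t) (Sym m)"
  proof (rule inj_onI)
    fix y y' assume "y \<circ> t = y' \<circ> t"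
    then have "y \<circ> t \<circ> t = y' \<circ> t \<circ> t" by simp
    then show "y = y'" by (simp add: o_assoc[symmetric] tt)
  qed
  ultimately show ?thesis by (simp add: card_image card_Sym)
qed

lemma ccard_Suc:
  assumes "\<sigma> \<in> Sym n"
  defines "lam \<equiv> cycle_type n \<sigma>"
  shows "Suc (count lam 1) * ccard (Suc n) (add_mset 1 lam) = Suc n * ccard n lam"
proof -
  define S' where "S' = {\<tau>\<in>Sym (Suc n). cycle_type (Suc n) \<tau> = add_mset 1 lam}"
  have fS: "finite S'" unfolding S'_def using finite_Sym by simp
  have 1: "(\<Sum>\<tau>\<in>S'. card {i. i < Suc n \<and> \<tau> i = i}) = card S' * Suc (count lam 1)"
  proof -
    have "(\<Sum>\<tau>\<in>S'. card {i. i < Suc n \<and> \<tau> i = i}) = (\<Sum>\<tau>\<in>S'. Suc (count lam 1))"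
    proof (intro sum.cong refl)
      fix \<tau> assume "\<tau> \<in> S'"
      then have "\<tau> \<in> Sym (Suc n)" "cycle_type (Suc n) \<tau> = add_mset 1 lam" by (auto simp: S'_def)
      then show "card {i. i < Suc n \<and> \<tau> i = i} = Suc (count lam 1)"
        using cycle_type_count1[of \<tau> "Suc n"] by simp
    qed
    then show ?thesis by simp
  qed
  have 2: "(\<Sum>\<tau>\<in>S'. card {i. i < Suc n \<and> \<tau> i = i}) = (\<Sum>i<Suc n. card {\<tau>\<in>S'. \<tau> i = i})"
  proof -
    have "(\<Sum>\<tau>\<in>S'. card {i. i < Suc n \<and> \<tau> i = i}) = (\<Sum>\<tau>\<in>S'. \<Sum>i<Suc n. if \<tau> i = i then 1 else 0)"
    proof (intro sum.cong refl)
      fix \<tau> show "card {i. i < Suc n \<and> \<tau> i = i} = (\<Sum>i<Suc n. if \<tau> i = i then 1 else 0)"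
        using card_filter_sum[of "{..<Suc n}" "\<lambda>i. \<tau> i = i"] by (simp add: lessThan_def)
    qed
    also have "\<dots> = (\<Sum>i<Suc n. \<Sum>\<tau>\<in>S'. if \<tau> i = i then 1 else 0)" by (rule sum.swap)
    also have "\<dots> = (\<Sum>i<Suc n. card {\<tau>\<in>S'. \<tau> i = i})"
      using card_filter_sum[OF fS] by simp
    finally show ?thesis .
  qed
  have 3: "card {\<tau>\<in>S'. \<tau> i = i} = card {\<tau>\<in>S'. \<tau> n = n}" if i: "i < Suc n" for i
  proof -
    define t where "t = transpose i n"
    have t: "t \<in> Sym (Suc n)" unfolding t_def using i by (intro transpose_Sym) auto
    have it: "inv t = t" unfolding t_def by simp
    have tt: "t (t x) = x" for x unfolding t_def by simp
    have cS: "t \<circ> \<tau> \<circ> t \<in> S'" if "\<tau> \<in> S'" for \<tau>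
      using that Sym_conj[OF _ t, of \<tau>] cycle_type_conj[OF _ t, of \<tau>] by (simp add: S'_def it)
    have "{\<tau>\<in>S'. \<tau> n = n} = (\<lambda>\<tau>. t \<circ> \<tau> \<circ> t) ` {\<tau>\<in>S'. \<tau> i = i}"
    proof (intro set_eqI iffI)
      fix \<tau> assume a: "\<tau> \<in> {\<tau>\<in>S'. \<tau> n = n}"
      have "t \<circ> \<tau> \<circ> t \<in> {\<tau>\<in>S'. \<tau> i = i}" using a cS by (auto simp: t_def)
      moreover have "\<tau> = t \<circ> (t \<circ> \<tau> \<circ> t) \<circ> t" by (auto simp: tt)
      ultimately show "\<tau> \<in> (\<lambda>\<tau>. t \<circ> \<tau> \<circ> t) ` {\<tau>\<in>S'. \<tau> i = i}" by blast
    next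
      fix \<tau> assume "\<tau> \<in> (\<lambda>\<tau>. t \<circ> \<tau> \<circ> t) ` {\<tau>\<in>S'. \<tau> i = i}"
      then obtain \<rho> where "\<rho> \<in> S'" "\<rho> i = i" "\<tau> = t \<circ> \<rho> \<circ> t" by blast
      then show "\<tau> \<in> {\<tau>\<in>S'. \<tau> n = n}" using cS by (auto simp: t_def)
    qed
    moreover have "inj_on (\<lambda>\<tau>. t \<circ> \<tau> \<circ> t) {\<tau>\<in>S'. \<tau> i = i}"
    proof (rule inj_onI)
      fix a b assume "t \<circ> a \<circ> t = t \<circ> b \<circ> t"
      then have "\<And>x. t (a (t x)) = t (b (t x))" by (simp add: fun_eq_iff)
      then have "\<And>x. t (t (a (t (t x)))) = t (t (b (t (t x))))" by metis
      then show "a = b" by (simp add: tt fun_eq_iff)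
    qed
    ultimately show ?thesis by (simp add: card_image)
  qed
  have 4: "{\<tau>\<in>S'. \<tau> n = n} = {\<tau>\<in>Sym n. cycle_type n \<tau> = lam}"
  proof (intro set_eqI iffI)
    fix \<tau> assume a: "\<tau> \<in> {\<tau>\<in>S'. \<tau> n = n}"
    then have "\<tau> \<in> Sym n" using Sym_Suc_fix by (auto simp: S'_def)
    then show "\<tau> \<in> {\<tau>\<in>Sym n. cycle_type n \<tau> = lam}" using a cycle_type_Suc by (auto simp: S'_def)
  next
    fix \<tau> assume a: "\<tau> \<in> {\<tau>\<in>Sym n. cycle_type n \<tau> = lam}"
    then show "\<tau> \<in> {\<tau>\<in>S'. \<tau> n = n}"
      using Sym_mono[of \<tau> n "Suc n"] Sym_out[of \<tau> n n] cycle_type_Suc[of \<tau> n] by (auto simp: S'_def)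
  qed
  have "card S' * Suc (count lam 1) = (\<Sum>i<Suc n. card {\<tau>\<in>S'. \<tau> i = i})"
    using 1 2 by simp
  also have "\<dots> = (\<Sum>i<Suc n. card {\<tau>\<in>S'. \<tau> n = n})"
    by (rule sum.cong[OF refl]) (rule 3, simp)
  also have "\<dots> = Suc n * ccard n lam" using 4 by (simp add: ccard_def)
  finally show ?thesis by (simp add: S'_def ccard_def mult.commute)
qed

lemma ind_value:
  assumes "class_fun (Suc m) \<chi>" "\<sigma> \<in> Sym (Suc m)"
  shows "ind_char (Sym (Suc m)) (Sym m) \<chi> \<sigma> = \<chi> \<sigma> * of_nat (card {i. i < Suc m \<and> \<sigma> i = i})"
proof -
  let ?n = "Suc m"
  have "(\<Sum>x\<in>Sym ?n. if x \<circ> \<sigma> \<circ> inv x \<in> Sym m then \<chi> (x \<circ> \<sigma> \<circ> inv x) else 0)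
       = (\<Sum>x\<in>Sym ?n. if x \<circ> \<sigma> \<circ> inv x \<in> Sym m then \<chi> \<sigma> else 0)"
    using assms unfolding class_fun_def by (intro sum.cong) auto
  also have "\<dots> = \<chi> \<sigma> * of_nat (card {x\<in>Sym ?n. x \<circ> \<sigma> \<circ> inv x \<in> Sym m})"
    using finite_Sym by (simp add: sum.If_cases Int_def conj_commute)
  also have "{x\<in>Sym ?n. x \<circ> \<sigma> \<circ> inv x \<in> Sym m} = {x\<in>Sym ?n. \<sigma> (inv x m) = inv x m}"
  proof (intro Collect_cong conj_cong refl)
    fix x assume x: "x \<in> Sym ?n"
    have "x \<circ> \<sigma> \<circ> inv x \<in> Sym m \<longleftrightarrow> x (\<sigma> (inv x m)) = m"
      using Sym_fix_iff[OF Sym_conj[OF assms(2) x]] by simp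
    also have "\<dots> \<longleftrightarrow> \<sigma> (inv x m) = inv x m"
      using permutes_inv_eq[OF x[unfolded Sym_permutes], of m "\<sigma> (inv x m)"] by auto
    finally show "x \<circ> \<sigma> \<circ> inv x \<in> Sym m \<longleftrightarrow> \<sigma> (inv x m) = inv x m" .
  qed
  also have "card {x\<in>Sym ?n. \<sigma> (inv x m) = inv x m}
       = (\<Sum>i\<in>{i\<in>{..<?n}. \<sigma> i = i}. card {x\<in>Sym ?n. inv x m = i})"
    by (rule card_fiber_sum) (auto simp: finite_Sym intro: Sym_in[OF Sym_inv])
  also have "\<dots> = (\<Sum>i\<in>{i\<in>{..<?n}. \<sigma> i = i}. fact m)"
  proof (intro sum.cong refl)
    fix i assume "i \<in> {i\<in>{..<?n}. \<sigma> i = i}"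
    then have i: "i < ?n" by auto
    have "{x\<in>Sym ?n. inv x m = i} = {x\<in>Sym ?n. x i = m}"
      by (intro Collect_cong conj_cong refl) (simp add: Sym_permutes permutes_inv_eq)
    then show "card {x\<in>Sym ?n. inv x m = i} = fact m" using perm_fiber_card[OF i] by simp
  qed
  also have "\<dots> = card {i. i < ?n \<and> \<sigma> i = i} * fact m"
    by (simp add: lessThan_def)
  finally have eq: "(\<Sum>x\<in>Sym ?n. if x \<circ> \<sigma> \<circ> inv x \<in> Sym m then \<chi> (x \<circ> \<sigma> \<circ> inv x) else 0)
       = \<chi> \<sigma> * of_nat (card {i. i < ?n \<and> \<sigma> i = i} * fact m)" .
  show ?thesis unfolding ind_char_def card_Sym eq by simp
qed

lemma part1:
  fixes W :: "nat \<Rightarrow> (nat \<Rightarrow> nat) \<Rightarrow> complex"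
  assumes W: "\<forall>n\<ge>1. class_fun n (W n) \<and> frob n (W n) = Hk n"
  shows "\<forall>n\<ge>1. \<forall>\<sigma>\<in>Sym n. W (Suc n) \<sigma> = W n \<sigma> + ind_char (Sym n) (Sym (n - 1)) (W n) \<sigma>"
proof (intro allI impI ballI)
  fix n \<sigma> assume n: "1 \<le> n" and s: "\<sigma> \<in> Sym n"
  obtain m where m: "n = Suc m" using n by (cases n) auto
  define lam where "lam = cycle_type n \<sigma>"
  define c where "c = ccard n lam"
  define c' where "c' = ccard (Suc n) (add_mset 1 lam)"
  define f where "f = count lam 1"
  have s': "\<sigma> \<in> Sym (Suc n)" using Sym_mono[OF s] by simp
  have t': "cycle_type (Suc n) \<sigma> = add_mset 1 lam" unfolding lam_def by (rule cycle_type_Suc[OF s])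
  have cpos: "c > 0" unfolding c_def lam_def by (rule ccard_pos[OF s])
  have c'pos: "c' > 0" unfolding c'_def using ccard_pos[OF s'] t' by simp
  have rel: "Suc f * c' = Suc n * c" unfolding f_def c'_def c_def lam_def by (rule ccard_Suc[OF s])
  have fc: "card {i. i < n \<and> \<sigma> i = i} = f" unfolding f_def lam_def by (rule cycle_type_count1[OF s, symmetric])
  have Wn: "W n \<sigma> = Hk n lam * fact n / of_nat c"
    using class_fun_value[of n "W n" \<sigma>] W n s by (simp add: lam_def c_def)
  have WSn: "W (Suc n) \<sigma> = Hk n lam * fact (Suc n) / of_nat c'"
    using class_fun_value[of "Suc n" "W (Suc n)" \<sigma>] W n s' t' Hk_Suc[OF n] by (simp add: c'_def)
  have ind: "ind_char (Sym n) (Sym (n - 1)) (W n) \<sigma> = W n \<sigma> * of_nat f"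
    using ind_value[of m "W m" \<sigma>] ind_value[of m "W n" \<sigma>] W n s m fc by simp
  have relc: "of_nat (Suc f) * (of_nat c' :: complex) = of_nat (Suc n) * of_nat c"
    using rel by (metis of_nat_mult)
  have cne: "(of_nat c :: complex) \<noteq> 0" and c'ne: "(of_nat c' :: complex) \<noteq> 0" using cpos c'pos by auto
  have "W n \<sigma> + ind_char (Sym n) (Sym (n - 1)) (W n) \<sigma> = Hk n lam * fact n * of_nat (Suc f) / of_nat c"
    using ind Wn cne by (simp add: field_simps)
  also have "\<dots> = Hk n lam * fact (Suc n) / of_nat c'"
  proof -
    have e: "fact n * of_nat (Suc f) * of_nat c' = (fact (Suc n) * of_nat c :: complex)"
      using arg_cong[OF relc, of "\<lambda>z. fact n * z"] by (simp add: fact_Suc algebra_simps)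
    show ?thesis unfolding frac_eq_eq[OF cne c'ne]
      using arg_cong[OF e, of "\<lambda>z. Hk n lam * z"] by (simp add: mult.assoc)
  qed
  finally show "W (Suc n) \<sigma> = W n \<sigma> + ind_char (Sym n) (Sym (n - 1)) (W n) \<sigma>"
    using WSn by simp
qed

lemma cyc_pow: "(cyc n ^^ j) i = (if i < n then (i + j) mod n else i)"
proof (induct j)
  case 0 then show ?case by simp
next
  case (Suc j)
  show ?case
  proof (cases "i < n")
    case True
    then have "(i + j) mod n < n" by simp
    then show ?thesis using Suc True by (simp add: cyc_def mod_Suc_eq)
  next
    case False then show ?thesis using Suc by (simp add: cyc_def)
  qed
qed

lemma cyc_Sym: "cyc n \<in> Sym n"
proof -
  have inj: "inj_on (cyc n) {..<n}"
  proof (rule inj_onI)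
    fix a b assume ab: "a \<in> {..<n}" "b \<in> {..<n}" "cyc n a = cyc n b"
    then have "Suc a mod n = Suc b mod n" by (simp add: cyc_def)
    then show "a = b" using ab(1,2)
      by (auto simp: mod_Suc split: if_splits)
  qed
  have "cyc n ` {..<n} = {..<n}"
    by (rule endo_inj_surj) (use inj in \<open>auto simp: cyc_def\<close>)
  then show ?thesis unfolding Sym_permutes
  proof (intro bij_imp_permutes)
    show "bij_betw (cyc n) {..<n} {..<n}" using inj \<open>cyc n ` {..<n} = {..<n}\<close> by (simp add: bij_betw_def)
  qed (simp add: cyc_def)
qed

lemma cyc_pow_Sym: "cyc n ^^ j \<in> Sym n"
proof (induct j)
  case 0 then show ?case using Sym_id by (simp add: id_def)
next
  case (Suc j) then show ?case using Sym_comp[OF cyc_Sym Suc] by (metis funpow.simps(2))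
qed

lemma cyc_pow_0: "j < n \<Longrightarrow> (cyc n ^^ j) 0 = j"
  by (simp add: cyc_pow)

lemma cyc_pow_inj: "inj_on (\<lambda>j. cyc n ^^ j) {..<n}"
proof (rule inj_onI)
  fix a b assume "a \<in> {..<n}" "b \<in> {..<n}" "cyc n ^^ a = cyc n ^^ b"
  then show "a = b" using cyc_pow_0 by (metis lessThan_iff)
qed

lemma cyc_grp_img: "cyc_grp n = (\<lambda>j. cyc n ^^ j) ` {..<n}"
  by (auto simp: cyc_grp_def)

lemma card_cyc_grp: "card (cyc_grp n) = n"
  by (simp add: cyc_grp_img card_image cyc_pow_inj)

lemma cyc_grp_Sym: "cyc_grp n \<subseteq> Sym n"
  using cyc_pow_Sym by (auto simp: cyc_grp_def)

lemma lin_char_pow: "j < n \<Longrightarrow> lin_char n (cyc n ^^ j) = exp (2 * pi * \<i> / of_nat n) ^ j"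
proof -
  assume j: "j < n"
  have "(THE j'. j' < n \<and> cyc n ^^ j = cyc n ^^ j') = j"
  proof (rule the_equality)
    fix j' assume "j' < n \<and> cyc n ^^ j = cyc n ^^ j'"
    then show "j' = j" using cyc_pow_inj j by (auto simp: inj_on_def)
  qed (use j in auto)
  then show ?thesis by (simp add: lin_char_def)
qed

lemma cyc_pow_pow: "i < n \<Longrightarrow> ((cyc n ^^ j) ^^ k) i = (i + j * k) mod n"
  by (simp add: funpow_mult cyc_pow)

lemma cyc_commute: "(cyc n ^^ j) \<circ> cyc n = cyc n \<circ> (cyc n ^^ j)"
  by (metis funpow_Suc_right funpow.simps(2))

lemma centralizer_cyc:
  assumes "\<rho> \<in> Sym n" "\<rho> \<circ> cyc n = cyc n \<circ> \<rho>" "n \<ge> 1"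
  shows "\<rho> = cyc n ^^ (\<rho> 0)"
proof
  fix i
  have comm: "\<rho> ((cyc n ^^ k) x) = (cyc n ^^ k) (\<rho> x)" for k x
  proof (induct k)
    case (Suc k)
    have "\<rho> (cyc n ((cyc n ^^ k) x)) = cyc n (\<rho> ((cyc n ^^ k) x))"
      using assms(2) by (metis comp_apply)
    then show ?case using Suc by simp
  qed simp
  show "\<rho> i = (cyc n ^^ \<rho> 0) i"
  proof (cases "i < n")
    case True
    have r0: "\<rho> 0 < n" using Sym_in[OF assms(1)] assms(3) by auto
    have "\<rho> i = \<rho> ((cyc n ^^ i) 0)" using True cyc_pow_0 by simp
    also have "\<dots> = (cyc n ^^ i) (\<rho> 0)" by (rule comm)
    also have "\<dots> = (\<rho> 0 + i) mod n" using r0 by (simp add: cyc_pow)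
    also have "\<dots> = (cyc n ^^ \<rho> 0) i" using True by (simp add: cyc_pow add.commute)
    finally show ?thesis .
  next
    case False
    then show ?thesis using Sym_out[OF assms(1)] by (simp add: cyc_pow)
  qed
qed

lemma cyc_grp_iff:
  assumes "\<rho> \<in> Sym n" "n \<ge> 1"
  shows "\<rho> \<in> cyc_grp n \<longleftrightarrow> \<rho> \<circ> cyc n = cyc n \<circ> \<rho>"
proof
  assume "\<rho> \<in> cyc_grp n" then show "\<rho> \<circ> cyc n = cyc n \<circ> \<rho>" using cyc_commute by (auto simp: cyc_grp_def)
next
  assume c: "\<rho> \<circ> cyc n = cyc n \<circ> \<rho>"
  have "\<rho> 0 < n" using Sym_in[OF assms(1)] assms(2) by auto
  then show "\<rho> \<in> cyc_grp n" using centralizer_cyc[OF assms(1) c assms(2)] by (auto simp: cyc_grp_def)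
qed

lemma cyc_type:
  assumes jn: "j < n"
  shows "cycle_type n (cyc n ^^ j) = replicate_mset (gcd j n) (n div gcd j n)"
proof -
  define g where "g = gcd j n"
  have n0: "n > 0" using jn by simp
  have g0: "g > 0" using n0 by (simp add: g_def)
  have gn: "g dvd n" "g dvd j" by (auto simp: g_def)
  have gle: "g \<le> n" using gn(1) n0 by (simp add: dvd_imp_le)
  have ng: "n = g * (n div g)" using gn(1) by simp
  define R where "R r = {y. y < n \<and> y mod g = r}" for r
  define \<sigma> where "\<sigma> = cyc n ^^ j"
  have orb_R: "orb \<sigma> x = R (x mod g)" if x: "x < n" for x
  proof (intro set_eqI iffI)
    fix y assume "y \<in> orb \<sigma> x"
    then obtain k where y: "y = (x + j * k) mod n" unfolding orb_def \<sigma>_def using cyc_pow_pow[OF x] by auto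
    have "y mod g = (x + j * k) mod g" using y gn(1) by (simp add: mod_mod_cancel)
    also have "\<dots> = x mod g" using gn(2) by (metis dvd_mult2 mod_add_right_eq mod_0_imp_dvd add.right_neutral dvd_imp_mod_0 mod_add_eq)
    finally show "y \<in> R (x mod g)" using y n0 by (simp add: R_def)
  next
    fix y assume "y \<in> R (x mod g)"
    then have y: "y < n" "y mod g = x mod g" by (auto simp: R_def)
    show "y \<in> orb \<sigma> x"
    proof (cases "j = 0")
      case True
      then have "g = n" by (simp add: g_def)
      then have "y = x" using y x by simp
      then show ?thesis by (simp add: orb_self)
    next
      case False
      obtain u v where uv: "j * u = n * v + g" using bezout_nat[OF False, of n] g_def by auto
      have "(y + n) mod g = x mod g" using y(2) gn(1) by (simp add: mod_add_eq[symmetric])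
      then have "g dvd (y + n - x)" using x by (subst mod_eq_dvd_iff_nat[symmetric]) auto
      then obtain s where s: "y + n - x = g * s" by blast
      have "x + j * (u * s) = x + (n * v + g) * s" using uv by (metis mult.assoc)
      also have "\<dots> = y + n * (1 + v * s)" using s x by (simp add: algebra_simps)
      finally have "(x + j * (u * s)) mod n = (y + n * (1 + v * s)) mod n" by simp
      also have "\<dots> = y" using y(1) by (simp only: mod_mult_self2 mod_less)
      finally have "(x + j * (u * s)) mod n = y" .
      then have "((cyc n ^^ j) ^^ (u * s)) x = y" using cyc_pow_pow[OF x] by simp
      then show ?thesis unfolding \<sigma>_def by (metis orb_funpow)
    qed
  qed
  have orbs_eq: "orbs n \<sigma> = R ` {..<g}"
  proof (intro set_eqI iffI)
    fix A assume "A \<in> orbs n \<sigma>"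
    then obtain x where "x < n" "A = orb \<sigma> x" by (auto simp: orbs_def)
    then show "A \<in> R ` {..<g}" using orb_R g0 by auto
  next
    fix A assume "A \<in> R ` {..<g}"
    then obtain r where r: "r < g" "A = R r" by auto
    then have "r < n" using gle by simp
    then have "orb \<sigma> r = R r" using orb_R r by simp
    then show "A \<in> orbs n \<sigma>" using \<open>r < n\<close> r by (auto simp: orbs_def)
  qed
  have injR: "inj_on R {..<g}"
  proof (rule inj_onI)
    fix r r' assume rr: "r \<in> {..<g}" "r' \<in> {..<g}" "R r = R r'"
    have "r \<in> R r" using rr(1) gle by (auto simp: R_def)
    then have "r \<in> R r'" using rr(3) by simp
    then show "r = r'" using rr(1) by (auto simp: R_def)
  qed
  have cardR: "card (R r) = n div g" if r: "r < g" for r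
  proof -
    have "R r = (\<lambda>q. r + g * q) ` {..<n div g}"
    proof (intro set_eqI iffI)
      fix y assume "y \<in> R r"
      then have y: "y < n" "y mod g = r" by (auto simp: R_def)
      have "y = r + g * (y div g)" using y(2) by (metis mod_mult_div_eq add.commute)
      moreover have "y div g < n div g" using y(1) gn(1) g0
        by (metis div_less_iff_less_mult ng mult.commute)
      ultimately show "y \<in> (\<lambda>q. r + g * q) ` {..<n div g}" by blast
    next
      fix y assume "y \<in> (\<lambda>q. r + g * q) ` {..<n div g}"
      then obtain q where q: "q < n div g" "y = r + g * q" by auto
      have "g * (q + 1) \<le> g * (n div g)" using q(1) by (intro mult_le_mono2) simp
      then have "y < n" using q(2) r ng by simp
      moreover have "y mod g = r" using q(2) r by simp
      ultimately show "y \<in> R r" by (simp add: R_def)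
    qed
    moreover have "inj_on (\<lambda>q. r + g * q) {..<n div g}" using g0 by (auto simp: inj_on_def)
    ultimately show ?thesis by (simp add: card_image)
  qed
  have "cycle_type n \<sigma> = image_mset card (mset_set (R ` {..<g}))"
    by (simp add: cycle_type_orbs orbs_eq)
  also have "\<dots> = image_mset card (image_mset R (mset_set {..<g}))"
    by (simp add: image_mset_mset_set[OF injR])
  also have "\<dots> = image_mset (\<lambda>_. n div g) (mset_set {..<g})"
    by (simp add: multiset.map_comp o_def cong: image_mset_cong) (use cardR in \<open>auto intro: image_mset_cong\<close>)
  also have "\<dots> = replicate_mset g (n div g)" by (simp add: image_mset_const_eq)
  finally show ?thesis by (simp add: \<sigma>_def g_def)
qed

lemma Sym_o_inv: "p \<in> Sym n \<Longrightarrow> p \<circ> inv p = id" "p \<in> Sym n \<Longrightarrow> inv p \<circ> p = id"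
  unfolding Sym_permutes by (auto simp: permutes_inv_o)

lemma comp_right_iff: "p \<in> Sym n \<Longrightarrow> (A \<circ> p = B) \<longleftrightarrow> (A = B \<circ> inv p)"
proof
  assume p: "p \<in> Sym n" and "A \<circ> p = B"
  then have "A \<circ> p \<circ> inv p = B \<circ> inv p" by simp
  then show "A = B \<circ> inv p" using Sym_o_inv[OF p] by (simp add: o_assoc[symmetric])
next
  assume p: "p \<in> Sym n" and "A = B \<circ> inv p"
  then show "A \<circ> p = B" using Sym_o_inv[OF p] by (simp add: o_assoc[symmetric])
qed

lemma comp_left_iff: "p \<in> Sym n \<Longrightarrow> (p \<circ> A = B) \<longleftrightarrow> (A = inv p \<circ> B)"
proof
  assume p: "p \<in> Sym n" and "p \<circ> A = B"
  then have "inv p \<circ> (p \<circ> A) = inv p \<circ> B" by simp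
  then show "A = inv p \<circ> B" using Sym_o_inv[OF p] by (simp add: o_assoc)
next
  assume p: "p \<in> Sym n" and "A = inv p \<circ> B"
  then show "p \<circ> A = B" using Sym_o_inv[OF p] by (simp add: o_assoc)
qed

lemma frob_cong: "(\<And>\<sigma>. \<sigma> \<in> Sym n \<Longrightarrow> \<chi> \<sigma> = \<psi> \<sigma>) \<Longrightarrow> frob n \<chi> = frob n \<psi>"
  unfolding frob_def by (intro ext arg_cong2[where f="(/)"] sum.cong refl) auto

lemma conj_bij: "x \<in> Sym n \<Longrightarrow> bij_betw (\<lambda>\<sigma>. x \<circ> \<sigma> \<circ> inv x) (Sym n) (Sym n)"
proof (rule bij_betw_byWitness[where f'="\<lambda>\<tau>. inv x \<circ> \<tau> \<circ> x"])
  assume x: "x \<in> Sym n"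
  show "\<forall>a\<in>Sym n. inv x \<circ> (x \<circ> a \<circ> inv x) \<circ> x = a"
    by (auto simp: fun_eq_iff Sym_inv_apply[OF x])
  show "\<forall>a'\<in>Sym n. x \<circ> (inv x \<circ> a' \<circ> x) \<circ> inv x = a'"
    by (auto simp: fun_eq_iff Sym_inv_apply[OF x])
  show "(\<lambda>\<sigma>. x \<circ> \<sigma> \<circ> inv x) ` Sym n \<subseteq> Sym n" using x Sym_conj by auto
  show "(\<lambda>\<tau>. inv x \<circ> \<tau> \<circ> x) ` Sym n \<subseteq> Sym n"
    using Sym_conj[OF _ Sym_inv[OF x]] Sym_inv_inv[OF x] by auto
qed

lemma frob_ind:
  assumes H: "H \<subseteq> Sym n"
  shows "frob n (ind_char (Sym n) H \<chi>) lam
       = (\<Sum>h\<in>H. if cycle_type n h = lam then \<chi> h else 0) / of_nat (card H)"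
proof -
  define K where "K = (\<Sum>h\<in>H. if cycle_type n h = lam then \<chi> h else 0)"
  define F :: "(nat \<Rightarrow> nat) \<Rightarrow> (nat \<Rightarrow> nat) \<Rightarrow> complex" where "F x \<sigma> = (if x \<circ> \<sigma> \<circ> inv x \<in> H then \<chi> (x \<circ> \<sigma> \<circ> inv x) else 0)" for x \<sigma>
  define G :: "(nat \<Rightarrow> nat) \<Rightarrow> complex" where "G h = (if cycle_type n h = lam \<and> h \<in> H then \<chi> h else 0)" for h
  have inner: "(\<Sum>\<sigma>\<in>Sym n. if cycle_type n \<sigma> = lam then F x \<sigma> else 0) = K" if x: "x \<in> Sym n" for x
  proof -
    have "(\<Sum>\<sigma>\<in>Sym n. if cycle_type n \<sigma> = lam then F x \<sigma> else 0) = (\<Sum>\<sigma>\<in>Sym n. G (x \<circ> \<sigma> \<circ> inv x))"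
      using cycle_type_conj[OF _ x] by (intro sum.cong refl) (auto simp: F_def G_def)
    also have "\<dots> = (\<Sum>h\<in>Sym n. G h)" by (rule sum.reindex_bij_betw[OF conj_bij[OF x]])
    also have "\<dots> = (\<Sum>h\<in>H. G h)"
      using H finite_Sym by (intro sum.mono_neutral_right) (auto simp: G_def)
    also have "\<dots> = K" by (auto simp: K_def G_def intro: sum.cong)
    finally show ?thesis .
  qed
  have "frob n (ind_char (Sym n) H \<chi>) lam
      = (\<Sum>\<sigma>\<in>Sym n. if cycle_type n \<sigma> = lam then (\<Sum>x\<in>Sym n. F x \<sigma>) / of_nat (card H) else 0) / fact n"
    unfolding frob_def ind_char_def F_def ..
  also have "\<dots> = (\<Sum>\<sigma>\<in>Sym n. (\<Sum>x\<in>Sym n. if cycle_type n \<sigma> = lam then F x \<sigma> else 0) / of_nat (card H)) / fact n"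
    by (intro arg_cong2[where f="(/)"] sum.cong refl) simp
  also have "\<dots> = (\<Sum>\<sigma>\<in>Sym n. \<Sum>x\<in>Sym n. if cycle_type n \<sigma> = lam then F x \<sigma> else 0) / of_nat (card H) / fact n"
    by (simp only: sum_divide_distrib[symmetric])
  also have "(\<Sum>\<sigma>\<in>Sym n. \<Sum>x\<in>Sym n. if cycle_type n \<sigma> = lam then F x \<sigma> else 0)
      = (\<Sum>x\<in>Sym n. \<Sum>\<sigma>\<in>Sym n. if cycle_type n \<sigma> = lam then F x \<sigma> else 0)"
    by (rule sum.swap)
  also have "\<dots> = (\<Sum>x\<in>Sym n. K)"
    by (rule sum.cong[OF refl]) (rule inner)
  also have "(\<Sum>x\<in>Sym n. K) / of_nat (card H) / fact n = K / of_nat (card H)" by (simp add: card_Sym)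
  finally show ?thesis by (simp add: K_def)
qed

lemma Sym_canc:
  assumes "p \<in> Sym n"
  shows "p \<circ> inv p = id" "inv p \<circ> p = id" "A \<circ> p \<circ> inv p = A" "A \<circ> inv p \<circ> p = A"
  using Sym_o_inv[OF assms] by (auto simp: o_assoc[symmetric])

lemma cyc_type_full: "n \<ge> 1 \<Longrightarrow> cycle_type n (cyc n) = {#n#}"
proof (cases "n = 1")
  case True
  have "cyc 1 = cyc 1 ^^ 0" by (auto simp: cyc_def)
  then show ?thesis using True cyc_type[of 0 1] by simp
next
  case False
  assume "n \<ge> 1"
  then have "1 < n" using False by simp
  then show ?thesis using cyc_type[of 1 n] by simp
qed

lemma conj_ind:
  assumes n: "n \<ge> 1" and s: "\<sigma> \<in> Sym n"
  shows "conj_char n \<sigma> = ind_char (Sym n) (cyc_grp n) (\<lambda>_. 1) \<sigma>"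
proof -
  define c where "c = cyc n"
  have cS: "c \<in> Sym n" unfolding c_def by (rule cyc_Sym)
  define g where "g x = inv x \<circ> c \<circ> x" for x :: "nat \<Rightarrow> nat"
  define NC where "NC = {\<tau>\<in>Sym n. cycle_type n \<tau> = {#n#}}"
  have gNC: "g x \<in> NC" if x: "x \<in> Sym n" for x
  proof -
    have "g x = inv x \<circ> c \<circ> inv (inv x)" using Sym_inv_inv[OF x] by (simp add: g_def)
    then show ?thesis using Sym_conj[OF cS Sym_inv[OF x]] cycle_type_conj[OF cS Sym_inv[OF x]]
        cyc_type_full[OF n] by (simp add: NC_def c_def)
  qed
  have gS: "g x \<in> Sym n" if "x \<in> Sym n" for x using gNC[OF that] by (simp add: NC_def)
  have stepb: "x \<circ> \<sigma> \<circ> inv x \<in> cyc_grp n \<longleftrightarrow> \<sigma> \<circ> g x \<circ> inv \<sigma> = g x" if x: "x \<in> Sym n" for x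
  proof -
    have "x \<circ> \<sigma> \<circ> inv x \<in> cyc_grp n \<longleftrightarrow> (x \<circ> \<sigma> \<circ> inv x) \<circ> c = c \<circ> (x \<circ> \<sigma> \<circ> inv x)"
      unfolding c_def by (rule cyc_grp_iff[OF Sym_conj[OF s x] n])
    also have "\<dots> \<longleftrightarrow> inv x \<circ> ((x \<circ> \<sigma> \<circ> inv x) \<circ> c) \<circ> x = inv x \<circ> (c \<circ> (x \<circ> \<sigma> \<circ> inv x)) \<circ> x"
    proof
      assume "inv x \<circ> ((x \<circ> \<sigma> \<circ> inv x) \<circ> c) \<circ> x = inv x \<circ> (c \<circ> (x \<circ> \<sigma> \<circ> inv x)) \<circ> x"
      then have "x \<circ> (inv x \<circ> ((x \<circ> \<sigma> \<circ> inv x) \<circ> c) \<circ> x) \<circ> inv x = x \<circ> (inv x \<circ> (c \<circ> (x \<circ> \<sigma> \<circ> inv x)) \<circ> x) \<circ> inv x"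
        by simp
      then show "(x \<circ> \<sigma> \<circ> inv x) \<circ> c = c \<circ> (x \<circ> \<sigma> \<circ> inv x)"
        by (simp add: o_assoc Sym_canc[OF x])
    qed simp
    also have "\<dots> \<longleftrightarrow> \<sigma> \<circ> g x = g x \<circ> \<sigma>"
      by (simp add: o_assoc Sym_canc[OF x] g_def)
    also have "\<dots> \<longleftrightarrow> \<sigma> \<circ> g x \<circ> inv \<sigma> = g x"
      using comp_right_iff[OF Sym_inv[OF s], of "\<sigma> \<circ> g x" "g x"] Sym_inv_inv[OF s] by auto
    finally show ?thesis .
  qed
  have fiber: "card {x\<in>Sym n. g x = \<tau>} = n" if t: "\<tau> \<in> NC" for \<tau>
  proof -
    have tS: "\<tau> \<in> Sym n" and tt: "cycle_type n \<tau> = {#n#}" using t by (auto simp: NC_def)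
    have ct: "cycle_type n c = cycle_type n \<tau>" using tt cyc_type_full[OF n] by (simp add: c_def)
    obtain \<phi> where \<phi>: "\<phi> \<in> Sym n" "\<tau> = \<phi> \<circ> c \<circ> inv \<phi>"
      using same_type_conj[OF cS tS ct] by blast
    define x0 where "x0 = inv \<phi>"
    have x0: "x0 \<in> Sym n" unfolding x0_def by (rule Sym_inv[OF \<phi>(1)])
    have gx0: "g x0 = \<tau>" using \<phi> Sym_inv_inv[OF \<phi>(1)] by (simp add: g_def x0_def)
    have "{x\<in>Sym n. g x = \<tau>} = (\<lambda>\<rho>. \<rho> \<circ> x0) ` cyc_grp n"
    proof (intro set_eqI iffI)
      fix x assume "x \<in> {x\<in>Sym n. g x = \<tau>}"
      then have x: "x \<in> Sym n" and e: "inv x \<circ> c \<circ> x = inv x0 \<circ> c \<circ> x0" using gx0 by (auto simp: g_def)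
      define \<rho> where "\<rho> = x \<circ> inv x0"
      have \<rho>S: "\<rho> \<in> Sym n" unfolding \<rho>_def by (intro Sym_comp x Sym_inv x0)
      have "x \<circ> (inv x \<circ> c \<circ> x) \<circ> inv x0 = x \<circ> (inv x0 \<circ> c \<circ> x0) \<circ> inv x0" using e by simp
      then have "c \<circ> \<rho> = \<rho> \<circ> c" by (simp add: o_assoc Sym_canc[OF x] Sym_canc[OF x0] \<rho>_def)
      then have "\<rho> \<in> cyc_grp n" using cyc_grp_iff[OF \<rho>S n] by (simp add: c_def)
      moreover have "x = \<rho> \<circ> x0" by (simp add: \<rho>_def o_assoc Sym_canc[OF x0])
      ultimately show "x \<in> (\<lambda>\<rho>. \<rho> \<circ> x0) ` cyc_grp n" by blast
    next
      fix x assume "x \<in> (\<lambda>\<rho>. \<rho> \<circ> x0) ` cyc_grp n"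
      then obtain \<rho> where \<rho>: "\<rho> \<in> cyc_grp n" "x = \<rho> \<circ> x0" by blast
      have \<rho>S: "\<rho> \<in> Sym n" using \<rho>(1) cyc_grp_Sym by auto
      have comm: "\<rho> \<circ> c = c \<circ> \<rho>" using cyc_grp_iff[OF \<rho>S n] \<rho>(1) by (simp add: c_def)
      have xS: "x \<in> Sym n" using \<rho> \<rho>S x0 by (simp add: Sym_comp)
      have ix: "inv (\<rho> \<circ> x0) = inv x0 \<circ> inv \<rho>" using Sym_bij[OF \<rho>S] Sym_bij[OF x0] by (simp add: o_inv_distrib)
      have "inv \<rho> \<circ> c \<circ> \<rho> = inv \<rho> \<circ> (\<rho> \<circ> c)" by (simp add: comp_assoc comm)
      also have "\<dots> = c" by (simp add: o_assoc Sym_canc[OF \<rho>S])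
      finally have irc: "inv \<rho> \<circ> c \<circ> \<rho> = c" .
      have "g x = inv x0 \<circ> (inv \<rho> \<circ> c \<circ> \<rho>) \<circ> x0" unfolding g_def \<rho>(2) ix by (simp add: comp_assoc)
      then have "g x = inv x0 \<circ> c \<circ> x0" using irc by simp
      then show "x \<in> {x\<in>Sym n. g x = \<tau>}" using xS gx0 by (simp add: g_def)
    qed
    moreover have "inj_on (\<lambda>\<rho>. \<rho> \<circ> x0) (cyc_grp n)"
    proof (rule inj_onI)
      fix a b assume "a \<circ> x0 = b \<circ> x0"
      then have "a \<circ> x0 \<circ> inv x0 = b \<circ> x0 \<circ> inv x0" by simp
      then show "a = b" by (simp add: Sym_canc[OF x0])
    qed
    ultimately show ?thesis by (simp add: card_image card_cyc_grp)
  qed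
  have "card {x\<in>Sym n. x \<circ> \<sigma> \<circ> inv x \<in> cyc_grp n} = card {x\<in>Sym n. \<sigma> \<circ> g x \<circ> inv \<sigma> = g x}"
    using stepb by (intro arg_cong[where f=card] Collect_cong) blast
  also have "\<dots> = (\<Sum>\<tau>\<in>{\<tau>\<in>NC. \<sigma> \<circ> \<tau> \<circ> inv \<sigma> = \<tau>}. card {x\<in>Sym n. g x = \<tau>})"
    by (rule card_fiber_sum[OF finite_Sym]) (use gNC in \<open>auto simp: NC_def finite_Sym\<close>)
  also have "\<dots> = (\<Sum>\<tau>\<in>{\<tau>\<in>NC. \<sigma> \<circ> \<tau> \<circ> inv \<sigma> = \<tau>}. n)"
    using fiber by (intro sum.cong) auto
  also have "\<dots> = n * card {\<tau>\<in>Sym n. cycle_type n \<tau> = {#n#} \<and> \<sigma> \<circ> \<tau> \<circ> inv \<sigma> = \<tau>}"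
    by (simp add: NC_def conj_assoc)
  finally have e: "card {x\<in>Sym n. x \<circ> \<sigma> \<circ> inv x \<in> cyc_grp n}
     = n * card {\<tau>\<in>Sym n. cycle_type n \<tau> = {#n#} \<and> \<sigma> \<circ> \<tau> \<circ> inv \<sigma> = \<tau>}" .
  have "(\<Sum>x\<in>Sym n. if x \<circ> \<sigma> \<circ> inv x \<in> cyc_grp n then (1::complex) else 0)
      = of_nat (card {x\<in>Sym n. x \<circ> \<sigma> \<circ> inv x \<in> cyc_grp n})"
    using finite_Sym by (simp add: sum.If_cases Int_def conj_commute)
  then show ?thesis unfolding ind_char_def conj_char_def card_cyc_grp e using n by simp
qed

definition om :: "nat \<Rightarrow> complex" where "om n = exp (2 * pi * \<i> / of_nat n)"

lemma om_pow: "om n ^ k = exp (2 * pi * \<i> * of_nat k / of_nat n)"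
  unfolding om_def exp_of_nat_mult[symmetric] by (simp add: field_simps)

lemma om_pow_div:
  fixes a d :: nat
  assumes "a dvd d" "0 < a"
  shows "om d ^ (a * i) = om (d div a) ^ i"
proof -
  obtain q where q: "d = a * q" using assms(1) by blast
  have "d div a = q" using q assms(2) by simp
  moreover have "(2 * pi * \<i> * of_nat (a * i) / of_nat d :: complex) = 2 * pi * \<i> * of_nat i / of_nat q"
    using q assms(2) by (cases "q = 0") (simp_all add: field_simps)
  ultimately show ?thesis by (simp add: om_pow)
qed

lemma om_pow_self: "0 < k \<Longrightarrow> om k ^ k = 1"
  by (simp add: om_pow)

lemma om_ne1:
  assumes "1 < k" shows "om k \<noteq> 1"
proof
  assume "om k = 1"
  then have "cis (2 * pi / real k) = 1" unfolding om_def cis_conv_exp by (simp add: field_simps)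
  then have "cos (2 * pi / real k) = 1" by (simp add: complex_eq_iff)
  then obtain z :: int where z: "2 * pi / real k = of_int z * 2 * pi" by (auto simp: cos_one_2pi_int)
  have "1 / real k = (2 * pi / real k) / (2 * pi)" using pi_gt_zero by simp
  also have "\<dots> = of_int z" unfolding z using pi_gt_zero by simp
  finally have "1 / real k = of_int z" .
  then have "real k * of_int z = 1" using assms by (simp add: field_simps)
  also have "real k * of_int z = of_int (int k * z)" by simp
  finally have "int k * z = 1" by linarith
  then show False using assms by (auto simp: zmult_eq_1_iff)
qed

lemma geo_om: "0 < k \<Longrightarrow> (\<Sum>i<k. om k ^ i) = (if k = 1 then 1 else 0)"
proof (cases "k = 1")
  case False
  assume "0 < k"
  then have "1 < k" using False by simp
  then show ?thesis using geometric_sum[OF om_ne1[OF \<open>1 < k\<close>], of k] om_pow_self[of k] by simp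
qed (simp)

lemma gcd_fiber:
  fixes m N :: nat
  assumes "0 < m" "m dvd N"
  shows "{j. j < N \<and> gcd j N = m} = (\<lambda>i. m * i) ` {i. i < N div m \<and> coprime i (N div m)}"
proof -
  obtain q where q: "N = m * q" using assms(2) by blast
  have Nq: "N div m = q" unfolding q by (rule nonzero_mult_div_cancel_left) (use assms(1) in simp)
  show ?thesis unfolding Nq
  proof (intro set_eqI iffI)
    fix j assume "j \<in> {j. j < N \<and> gcd j N = m}"
    then have j: "j < N" "gcd j N = m" by auto
    have "m dvd j" using gcd_dvd1[of j N] j(2) by simp
    then obtain i where i: "j = m * i" by blast
    have "m * gcd i q = gcd (m * i) (m * q)" by (rule gcd_mult_distrib_nat)
    also have "\<dots> = m" using j(2) i q by simp
    finally have "gcd i q = 1" using assms(1) by simp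
    moreover have "i < q" using j(1) i q assms(1) by simp
    ultimately show "j \<in> (\<lambda>i. m * i) ` {i. i < q \<and> coprime i q}" using i by (auto simp: coprime_iff_gcd_eq_1)
  next
    fix j assume "j \<in> (\<lambda>i. m * i) ` {i. i < q \<and> coprime i q}"
    then obtain i where i: "j = m * i" "i < q" "coprime i q" by auto
    have "gcd j N = m * gcd i q" unfolding i(1) q by (rule gcd_mult_distrib_nat[symmetric])
    then have "gcd j N = m" using i(3) by simp
    moreover have "j < N" using i q assms(1) by simp
    ultimately show "j \<in> {j. j < N \<and> gcd j N = m}" by simp
  qed
qed

lemma sum_gcd_fiber:
  fixes m N :: nat
  assumes "0 < m" "m dvd N"
  shows "(\<Sum>j\<in>{j. j < N \<and> gcd j N = m}. f j) = (\<Sum>i\<in>{i. i < N div m \<and> coprime i (N div m)}. f (m * i))"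
proof -
  have inj: "inj_on (\<lambda>i. m * i) {i. i < N div m \<and> coprime i (N div m)}" using assms(1) by (simp add: inj_on_def)
  show ?thesis unfolding gcd_fiber[OF assms] sum.reindex[OF inj] by simp
qed

lemma card_coprime_totient:
  fixes e :: nat
  assumes "0 < e"
  shows "card {i. i < e \<and> coprime i e} = totient e"
proof -
  have "bij_betw (\<lambda>i. if i = 0 then e else i) {i. i < e \<and> coprime i e} (totatives e)"
  proof (rule bij_betw_byWitness[where f'="\<lambda>k. k mod e"])
    show "\<forall>a\<in>{i. i < e \<and> coprime i e}. (if a = 0 then e else a) mod e = a" by auto
    show "\<forall>a'\<in>totatives e. (if a' mod e = 0 then e else a' mod e) = a'"
    proof
      fix a' assume a': "a' \<in> totatives e"
      then have "0 < a'" "a' \<le> e" by (auto simp: totatives_def)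
      then show "(if a' mod e = 0 then e else a' mod e) = a'"
        by (cases "a' = e") auto
    qed
    show "(\<lambda>i. if i = 0 then e else i) ` {i. i < e \<and> coprime i e} \<subseteq> totatives e"
      using assms by (auto simp: totatives_def)
    show "(\<lambda>k. k mod e) ` totatives e \<subseteq> {i. i < e \<and> coprime i e}"
    proof
      fix x assume "x \<in> (\<lambda>k. k mod e) ` totatives e"
      then obtain k where k: "k \<in> totatives e" "x = k mod e" by blast
      then have "coprime k e" by (simp add: totatives_def)
      then have "coprime (k mod e) e" using assms by simp
      then show "x \<in> {i. i < e \<and> coprime i e}" using k assms by simp
    qed
  qed
  then show ?thesis by (simp add: totient_def bij_betw_same_card)
qed

lemma dvd_fiber:
  fixes d e :: nat
  assumes "0 < d" "d dvd e"
  shows "{j. j < e \<and> d dvd j} = (\<lambda>i. d * i) ` {..<e div d}"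
proof -
  obtain q where q: "e = d * q" using assms(2) by blast
  have eq: "e div d = q" unfolding q by (rule nonzero_mult_div_cancel_left) (use assms(1) in simp)
  show ?thesis unfolding eq
  proof (intro set_eqI iffI)
    fix j assume "j \<in> {j. j < e \<and> d dvd j}"
    then obtain i where "j = d * i" "d * i < d * q" using q by (auto elim!: dvdE)
    then show "j \<in> (\<lambda>i. d * i) ` {..<q}" by auto
  next
    fix j assume "j \<in> (\<lambda>i. d * i) ` {..<q}"
    then show "j \<in> {j. j < e \<and> d dvd j}" using q assms(1) by auto
  qed
qed

lemma NT_S1:
  fixes e :: nat
  assumes e: "0 < e"
  shows "(\<Sum>j<e. of_nat (gcd j e) * om e ^ j)
       = (\<Sum>m | m dvd e. of_nat m * (\<Sum>i | i < e div m \<and> coprime i (e div m). om (e div m) ^ i))"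
proof -
  have fD: "finite {m. m dvd e}" using e by simp
  have "(\<Sum>j<e. of_nat (gcd j e) * om e ^ j)
      = (\<Sum>m\<in>{m. m dvd e}. \<Sum>j\<in>{j\<in>{..<e}. gcd j e = m}. of_nat (gcd j e) * om e ^ j)"
    by (rule sum.group[symmetric]) (use fD in auto)
  also have "\<dots> = (\<Sum>m\<in>{m. m dvd e}. of_nat m * (\<Sum>i | i < e div m \<and> coprime i (e div m). om (e div m) ^ i))"
  proof (rule sum.cong[OF refl])
    fix m assume "m \<in> {m. m dvd e}"
    then have m: "m dvd e" by simp
    then have m0: "0 < m" using e by (cases "m = 0") auto
    have "(\<Sum>j\<in>{j\<in>{..<e}. gcd j e = m}. of_nat (gcd j e) * om e ^ j)
        = (\<Sum>j\<in>{j. j < e \<and> gcd j e = m}. of_nat m * om e ^ j)"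
      by (intro sum.cong) auto
    also have "\<dots> = of_nat m * (\<Sum>j\<in>{j. j < e \<and> gcd j e = m}. om e ^ j)"
      by (simp add: sum_distrib_left)
    also have "(\<Sum>j\<in>{j. j < e \<and> gcd j e = m}. om e ^ j)
        = (\<Sum>i\<in>{i. i < e div m \<and> coprime i (e div m)}. om e ^ (m * i))"
      by (rule sum_gcd_fiber[OF m0 m])
    also have "\<dots> = (\<Sum>i\<in>{i. i < e div m \<and> coprime i (e div m)}. om (e div m) ^ i)"
      by (intro sum.cong refl om_pow_div m m0)
    finally show "(\<Sum>j\<in>{j\<in>{..<e}. gcd j e = m}. of_nat (gcd j e) * om e ^ j)
        = of_nat m * (\<Sum>i | i < e div m \<and> coprime i (e div m). om (e div m) ^ i)" .
  qed
  finally show ?thesis .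
qed

lemma NT_S2:
  fixes e :: nat
  assumes e: "0 < e"
  shows "(\<Sum>j<e. of_nat (gcd j e) * om e ^ j) = of_nat (totient e)"
proof -
  define D where "D = {d. d dvd e}"
  have fD: "finite D" using e by (simp add: D_def)
  have g: "of_nat (gcd j e) = (\<Sum>d\<in>D. if d dvd j then of_nat (totient d) else (0::complex))" for j
  proof -
    have "gcd j e = (\<Sum>d | d dvd gcd j e. totient d)" by (rule totient_divisor_sum[symmetric])
    also have "{d. d dvd gcd j e} = {d\<in>D. d dvd j}" by (auto simp: D_def)
    finally have "of_nat (gcd j e) = (of_nat (\<Sum>d\<in>{d\<in>D. d dvd j}. totient d) :: complex)" by simp
    also have "\<dots> = (\<Sum>d\<in>{d\<in>D. d dvd j}. of_nat (totient d))" by simp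
    also have "\<dots> = (\<Sum>d\<in>D. if d dvd j then of_nat (totient d) else 0)"
      using fD by (simp add: sum.inter_filter)
    finally show ?thesis .
  qed
  have inner: "(\<Sum>j<e. if d dvd j then om e ^ j else 0) = (if d = e then 1 else 0)" if d: "d \<in> D" for d
  proof -
    have de: "d dvd e" using d by (simp add: D_def)
    then have d0: "0 < d" using e by (cases "d = 0") auto
    have q0: "0 < e div d" using de e d0 by (metis dvd_div_eq_0_iff neq0_conv)
    have "(\<Sum>j<e. if d dvd j then om e ^ j else 0) = (\<Sum>j\<in>{j. j < e \<and> d dvd j}. om e ^ j)"
      by (simp add: sum.If_cases lessThan_def Int_def conj_commute)
    also have "\<dots> = (\<Sum>i<e div d. om e ^ (d * i))"
      unfolding dvd_fiber[OF d0 de] by (subst sum.reindex) (use d0 in \<open>auto simp: inj_on_def\<close>)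
    also have "\<dots> = (\<Sum>i<e div d. om (e div d) ^ i)"
      by (intro sum.cong refl om_pow_div de d0)
    also have "\<dots> = (if e div d = 1 then 1 else 0)" by (rule geo_om[OF q0])
    also have "(e div d = 1) = (d = e)" using de d0 e by (metis div_self dvd_mult_div_cancel mult.right_neutral neq0_conv)
    finally show ?thesis .
  qed
  have "(\<Sum>j<e. of_nat (gcd j e) * om e ^ j)
      = (\<Sum>j<e. \<Sum>d\<in>D. if d dvd j then of_nat (totient d) * om e ^ j else 0)"
    unfolding g sum_distrib_right by (intro sum.cong refl) simp
  also have "\<dots> = (\<Sum>d\<in>D. \<Sum>j<e. if d dvd j then of_nat (totient d) * om e ^ j else 0)"
    by (rule sum.swap)
  also have "\<dots> = (\<Sum>d\<in>D. of_nat (totient d) * (\<Sum>j<e. if d dvd j then om e ^ j else 0))"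
    by (simp add: sum_distrib_left if_distrib cong: if_cong)
  also have "\<dots> = (\<Sum>d\<in>D. of_nat (totient d) * (if d = e then 1 else 0))"
    using inner by simp
  also have "\<dots> = (\<Sum>d\<in>D. if d = e then of_nat (totient d) else 0)"
    by (intro sum.cong refl) simp
  also have "\<dots> = of_nat (totient e)" using fD by (simp add: D_def sum.delta)
  finally show ?thesis .
qed

lemma NT:
  fixes e :: nat
  assumes "0 < e"
  shows "(\<Sum>m | m dvd e. of_nat m * (\<Sum>i | i < e div m \<and> coprime i (e div m). om (e div m) ^ i))
       = (of_nat (totient e) :: complex)"
  using NT_S1[OF assms] NT_S2[OF assms] by simp

lemma NI:
  fixes N a :: nat
  assumes N: "0 < N" and a: "0 < a" "a dvd N"
  shows "(\<Sum>m | m dvd N. of_nat m * (\<Sum>j | j < N div m \<and> gcd j (N div m) = a. om (N div m) ^ j))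
       = (of_nat (card {j. j < N \<and> gcd j N = a}) :: complex)"
proof -
  define e where "e = N div a"
  have Nae: "N = a * e" using a(2) by (simp add: e_def)
  have e0: "0 < e" using N Nae by (cases "e = 0") auto
  have rhs: "card {j. j < N \<and> gcd j N = a} = totient e"
  proof -
    have "card {j. j < N \<and> gcd j N = a} = card {i. i < e \<and> coprime i e}"
      unfolding gcd_fiber[OF a] e_def[symmetric] using a(1) by (subst card_image) (auto simp: inj_on_def)
    then show ?thesis using card_coprime_totient[OF e0] by simp
  qed
  have inner: "(\<Sum>j | j < N div m \<and> gcd j (N div m) = a. om (N div m) ^ j)
      = (if m dvd e then (\<Sum>i | i < e div m \<and> coprime i (e div m). om (e div m) ^ i) else 0)"
    if m: "m dvd N" for m
  proof (cases "m dvd e")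
    case True
    then obtain t where t: "e = m * t" by blast
    have m0: "0 < m" using t e0 by (cases "m = 0") auto
    have Nm: "N div m = a * t" using Nae t m0 by simp
    have em: "e div m = t" using t m0 by simp
    have "(\<Sum>j | j < N div m \<and> gcd j (N div m) = a. om (N div m) ^ j)
        = (\<Sum>i | i < N div m div a \<and> coprime i (N div m div a). om (N div m) ^ (a * i))"
      by (rule sum_gcd_fiber) (use a(1) Nm in auto)
    also have "\<dots> = (\<Sum>i | i < t \<and> coprime i t. om (a * t) ^ (a * i))" using Nm a(1) by simp
    also have "\<dots> = (\<Sum>i | i < t \<and> coprime i t. om t ^ i)"
      by (intro sum.cong refl) (use om_pow_div[of a "a * t"] a(1) in simp)
    finally show ?thesis using True em by simp
  next
    case False
    have "{j. j < N div m \<and> gcd j (N div m) = a} = {}"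
    proof (rule ccontr)
      assume "{j. j < N div m \<and> gcd j (N div m) = a} \<noteq> {}"
      then obtain j where "gcd j (N div m) = a" by auto
      then have "a dvd N div m" by (metis gcd_dvd2)
      then obtain t where t: "N div m = a * t" by blast
      have "N = m * (N div m)" using m by simp
      then have "a * e = a * (m * t)" using t Nae by (simp add: ac_simps)
      then have "e = m * t" using a(1) by simp
      then show False using False by simp
    qed
    then show ?thesis using False by (simp only: sum.empty if_False)
  qed
  have fN: "finite {m. m dvd N}" using N by simp
  have "(\<Sum>m | m dvd N. of_nat m * (\<Sum>j | j < N div m \<and> gcd j (N div m) = a. om (N div m) ^ j))
      = (\<Sum>m | m dvd N. if m dvd e then of_nat m * (\<Sum>i | i < e div m \<and> coprime i (e div m). om (e div m) ^ i) else 0)"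
    by (intro sum.cong refl) (simp add: inner)
  also have "\<dots> = (\<Sum>m\<in>{m. m dvd N \<and> m dvd e}. of_nat m * (\<Sum>i | i < e div m \<and> coprime i (e div m). om (e div m) ^ i))"
    using fN by (simp add: sum.inter_filter[symmetric])
  also have "{m. m dvd N \<and> m dvd e} = {m. m dvd e}" using Nae by auto
  also have "(\<Sum>m\<in>{m. m dvd e}. of_nat m * (\<Sum>i | i < e div m \<and> coprime i (e div m). om (e div m) ^ i))
      = of_nat (totient e)" by (rule NT[OF e0])
  finally show ?thesis using rhs by simp
qed

lemma frob_cyc_grp:
  assumes n: "n \<ge> 1"
  shows "frob n (ind_char (Sym n) (cyc_grp n) \<chi>) lam
     = (\<Sum>j<n. if replicate_mset (gcd j n) (n div gcd j n) = lam then \<chi> (cyc n ^^ j) else 0) / of_nat n"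
proof -
  have "frob n (ind_char (Sym n) (cyc_grp n) \<chi>) lam
      = (\<Sum>h\<in>cyc_grp n. if cycle_type n h = lam then \<chi> h else 0) / of_nat (card (cyc_grp n))"
    by (rule frob_ind[OF cyc_grp_Sym])
  also have "(\<Sum>h\<in>cyc_grp n. if cycle_type n h = lam then \<chi> h else 0)
      = (\<Sum>j<n. if cycle_type n (cyc n ^^ j) = lam then \<chi> (cyc n ^^ j) else 0)"
    unfolding cyc_grp_img by (subst sum.reindex[OF cyc_pow_inj]) simp
  also have "\<dots> = (\<Sum>j<n. if replicate_mset (gcd j n) (n div gcd j n) = lam then \<chi> (cyc n ^^ j) else 0)"
    by (intro sum.cong refl) (simp add: cyc_type)
  finally show ?thesis by (simp add: card_cyc_grp)
qed

lemma frob_conj: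
  assumes n: "n \<ge> 1"
  shows "frob n (conj_char n) lam
     = of_nat (card {j. j < n \<and> replicate_mset (gcd j n) (n div gcd j n) = lam}) / of_nat n"
proof -
  have "frob n (conj_char n) = frob n (ind_char (Sym n) (cyc_grp n) (\<lambda>_. 1))"
    by (rule frob_cong) (rule conj_ind[OF n])
  then show ?thesis using frob_cyc_grp[OF n, of "\<lambda>_. 1" lam]
    by (simp add: sum.If_cases lessThan_def Int_def conj_commute)
qed

lemma frob_lie:
  assumes n: "n \<ge> 1"
  shows "frob n (lie_char n) lam
     = (\<Sum>j<n. if replicate_mset (gcd j n) (n div gcd j n) = lam then om n ^ j else 0) / of_nat n"
  unfolding lie_char_def frob_cyc_grp[OF n]
  by (intro arg_cong2[where f="(/)"] sum.cong refl) (simp add: lin_char_pow om_def)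

lemma sum_rep_gcd: "0 < n \<Longrightarrow> sum_mset (replicate_mset (gcd j n) (n div gcd j n)) = n"
  by (simp add: sum_mset_replicate_mset)

lemma frob_lie_zero:
  assumes n: "n \<ge> 1" "sum_mset lam \<noteq> n"
  shows "frob n (lie_char n) lam = 0"
proof -
  have "(\<Sum>j<n. if replicate_mset (gcd j n) (n div gcd j n) = lam then om n ^ j else 0) = 0"
    using sum_rep_gcd[of n] n by (intro sum.neutral) auto
  then show ?thesis using frob_lie[OF n(1)] by simp
qed

lemma Lie_val: "Lie mu = (if 0 < sum_mset mu then frob (sum_mset mu) (lie_char (sum_mset mu)) mu else 0)"
proof -
  have "Lie mu = (\<Sum>k\<in>{k. Suc k = sum_mset mu}. frob (Suc k) (lie_char (Suc k)) mu)"
  proof -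
    have "{k. Suc k = sum_mset mu} \<subseteq> {sum_mset mu - 1}" by auto
    then have "finite {k. Suc k = sum_mset mu}" by (rule finite_subset) simp
    then show ?thesis unfolding Lie_def by (rule suminf_finite) (auto intro: frob_lie_zero)
  qed
  also have "\<dots> = (if 0 < sum_mset mu then frob (sum_mset mu) (lie_char (sum_mset mu)) mu else 0)"
  proof (cases "sum_mset mu")
    case 0
    have "{k. Suc k = sum_mset mu} = {}" unfolding 0 by simp
    then show ?thesis unfolding 0 by (simp only: sum.empty) simp
  next
    case (Suc k)
    then have "{k'. Suc k' = sum_mset mu} = {k}" by auto
    then show ?thesis using Suc by simp
  qed
  finally show ?thesis .
qed

lemma mult_div_mset:
  fixes m :: nat
  assumes "\<forall>x\<in>#nu. m dvd x"
  shows "nu = image_mset ((*) m) (image_mset (\<lambda>x. x div m) nu)"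
proof -
  have "image_mset ((*) m) (image_mset (\<lambda>x. x div m) nu) = image_mset (\<lambda>x. x) nu"
    unfolding multiset.map_comp o_def by (rule image_mset_cong) (use assms in auto)
  then show ?thesis by simp
qed

lemma image_mult_inj:
  fixes m :: nat
  assumes "0 < m" "image_mset ((*) m) A = image_mset ((*) m) B"
  shows "A = B"
proof -
  have "image_mset (\<lambda>x. x div m) (image_mset ((*) m) A) = image_mset (\<lambda>x. x div m) (image_mset ((*) m) B)"
    using assms(2) by simp
  then show ?thesis using assms(1) by (simp add: multiset.map_comp o_def)
qed

lemma sum_mult_mset: "sum_mset (image_mset ((*) (m::nat)) A) = m * sum_mset A"
  by (induct A) (auto simp: algebra_simps)

lemma pleth_dvd:
  fixes m N :: nat
  assumes N: "N \<ge> 1" and nu: "sum_mset nu = N" and m: "0 < m" "m dvd N"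
  defines "d \<equiv> N div m"
  shows "pleth_p m Lie nu
       = (\<Sum>j<d. if replicate_mset (gcd j d) (N div gcd j d) = nu then om d ^ j else 0) / of_nat d"
proof -
  have Nmd: "N = m * d" using m(2) by (simp add: d_def)
  have d0: "d \<ge> 1" using N Nmd by (cases d) auto
  have key: "N div g = m * (d div g)" if "g dvd d" for g
    using that Nmd m(1) by (metis div_mult_swap)
  show ?thesis
  proof (cases "\<forall>x\<in>#nu. m dvd x")
    case True
    define mu where "mu = image_mset (\<lambda>x. x div m) nu"
    have numu: "nu = image_mset ((*) m) mu" unfolding mu_def by (rule mult_div_mset[OF True])
    have smu: "sum_mset mu = d" using nu numu Nmd m(1) sum_mult_mset[of m mu] by simp
    have "pleth_p m Lie nu = Lie mu" using True m(1) by (simp add: pleth_p_def mu_def)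
    also have "\<dots> = frob d (lie_char d) mu" using smu d0 by (simp add: Lie_val)
    also have "\<dots> = (\<Sum>j<d. if replicate_mset (gcd j d) (d div gcd j d) = mu then om d ^ j else 0) / of_nat d"
      by (rule frob_lie[OF d0])
    also have "(\<Sum>j<d. if replicate_mset (gcd j d) (d div gcd j d) = mu then om d ^ j else 0)
        = (\<Sum>j<d. if replicate_mset (gcd j d) (N div gcd j d) = nu then om d ^ j else 0)"
    proof (intro sum.cong refl)
      fix j
      have g: "gcd j d dvd d" by simp
      have "image_mset ((*) m) (replicate_mset (gcd j d) (d div gcd j d)) = replicate_mset (gcd j d) (N div gcd j d)"
        using key[OF g] by simp
      then have "(replicate_mset (gcd j d) (d div gcd j d) = mu) = (replicate_mset (gcd j d) (N div gcd j d) = nu)"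
        using numu image_mult_inj[OF m(1)] by metis
      then show "(if replicate_mset (gcd j d) (d div gcd j d) = mu then om d ^ j else 0)
          = (if replicate_mset (gcd j d) (N div gcd j d) = nu then om d ^ j else 0)" by simp
    qed
    finally show ?thesis .
  next
    case False
    have "(\<Sum>j<d. if replicate_mset (gcd j d) (N div gcd j d) = nu then om d ^ j else 0) = 0"
    proof (intro sum.neutral ballI)
      fix j
      have "m dvd N div gcd j d" using key[of "gcd j d"] by simp
      then have "replicate_mset (gcd j d) (N div gcd j d) \<noteq> nu" using False by (auto split: if_splits)
      then show "(if replicate_mset (gcd j d) (N div gcd j d) = nu then om d ^ j else 0) = 0" by simp
    qed
    then show ?thesis using False by (auto simp: pleth_p_def)
  qed
qed

lemma pleth_ndvd:
  fixes m N :: nat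
  assumes nu: "sum_mset nu = N" and m: "0 < m" "\<not> m dvd N"
  shows "pleth_p m Lie nu = 0"
proof (cases "\<forall>x\<in>#nu. m dvd x")
  case True
  then have "nu = image_mset ((*) m) (image_mset (\<lambda>x. x div m) nu)" by (rule mult_div_mset)
  then have "N = m * sum_mset (image_mset (\<lambda>x. x div m) nu)" using nu sum_mult_mset by metis
  then show ?thesis using m(2) by simp
qed (auto simp: pleth_p_def)

lemma core:
  fixes N :: nat
  assumes N: "N \<ge> 1" and nu: "sum_mset nu = N"
  shows "(\<Sum>m\<in>{1..N}. pleth_p m Lie nu) = frob N (conj_char N) nu"
proof -
  define a where "a = size nu"
  define X where "X m = (\<Sum>j<N div m. if replicate_mset (gcd j (N div m)) (N div gcd j (N div m)) = nu
        then om (N div m) ^ j else 0) / of_nat (N div m)" for m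
  have fD: "finite {m. m dvd N}" using N by simp
  have "(\<Sum>m\<in>{1..N}. pleth_p m Lie nu) = (\<Sum>m\<in>{1..N}. if m dvd N then X m else 0)"
  proof (intro sum.cong refl)
    fix m assume "m \<in> {1..N}"
    then have m0: "0 < m" by simp
    show "pleth_p m Lie nu = (if m dvd N then X m else 0)"
      using pleth_dvd[OF N nu m0] pleth_ndvd[OF nu m0] by (simp add: X_def)
  qed
  also have "\<dots> = (\<Sum>m\<in>{m\<in>{1..N}. m dvd N}. X m)" by (rule sum.inter_filter[symmetric]) simp
  also have "{m\<in>{1..N}. m dvd N} = {m. m dvd N}"
    using N by (auto simp: dvd_imp_le intro: Nat.gr0I)
  finally have lhs: "(\<Sum>m\<in>{1..N}. pleth_p m Lie nu) = (\<Sum>m | m dvd N. X m)" .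
  have br: "g = a" if "replicate_mset g x = nu" for g x
    using that unfolding a_def by auto
  show ?thesis
  proof (cases "replicate_mset a (N div a) = nu")
    case True
    have "sum_mset nu = a * (N div a)" using True[symmetric] by simp
    then have aN: "a * (N div a) = N" using nu by simp
    then have a0: "0 < a" using N by (cases a) auto
    have adv: "a dvd N" using aN by (metis dvd_triv_left)
    have br2: "(replicate_mset g (N div g) = nu) \<longleftrightarrow> g = a" for g
      using br[of g "N div g"] True by blast
    have Xm: "X m = of_nat m / of_nat N * (\<Sum>j | j < N div m \<and> gcd j (N div m) = a. om (N div m) ^ j)"
      if m: "m dvd N" for m
    proof -
      have m0: "0 < m" using m N by (cases m) auto
      have Nm: "N = m * (N div m)" using m by simp
      have d0: "N div m \<noteq> 0" using N Nm by (cases "N div m") auto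
      have "(\<Sum>j<N div m. if replicate_mset (gcd j (N div m)) (N div gcd j (N div m)) = nu then om (N div m) ^ j else 0)
          = (\<Sum>j<N div m. if gcd j (N div m) = a then om (N div m) ^ j else 0)"
        by (intro sum.cong refl) (simp add: br2)
      also have "\<dots> = (\<Sum>j | j < N div m \<and> gcd j (N div m) = a. om (N div m) ^ j)"
        by (simp add: sum.If_cases lessThan_def Int_def conj_commute)
      finally have e1: "(\<Sum>j<N div m. if replicate_mset (gcd j (N div m)) (N div gcd j (N div m)) = nu then om (N div m) ^ j else 0)
          = (\<Sum>j | j < N div m \<and> gcd j (N div m) = a. om (N div m) ^ j)" .
      have e2: "1 / (of_nat (N div m) :: complex) = of_nat m / of_nat N"
        using d0 m0 by (subst (2) Nm) (simp add: field_simps)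
      have "X m = (\<Sum>j | j < N div m \<and> gcd j (N div m) = a. om (N div m) ^ j) / of_nat (N div m)"
        unfolding X_def e1 ..
      also have "\<dots> = (1 / of_nat (N div m)) * (\<Sum>j | j < N div m \<and> gcd j (N div m) = a. om (N div m) ^ j)"
        by simp
      also have "\<dots> = of_nat m / of_nat N * (\<Sum>j | j < N div m \<and> gcd j (N div m) = a. om (N div m) ^ j)"
        unfolding e2 ..
      finally show ?thesis .
    qed
    have "(\<Sum>m | m dvd N. X m) = (\<Sum>m | m dvd N. of_nat m * (\<Sum>j | j < N div m \<and> gcd j (N div m) = a. om (N div m) ^ j)) / of_nat N"
      by (simp add: Xm sum_divide_distrib)
    also have "\<dots> = of_nat (card {j. j < N \<and> gcd j N = a}) / of_nat N"
      using NI[of N a] N a0 adv by simp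
    also have "{j. j < N \<and> gcd j N = a} = {j. j < N \<and> replicate_mset (gcd j N) (N div gcd j N) = nu}"
      using br2 by auto
    also have "of_nat (card \<dots>) / of_nat N = frob N (conj_char N) nu"
      by (rule frob_conj[OF N, symmetric])
    finally show ?thesis using lhs by simp
  next
    case False
    have br2: "replicate_mset g (N div g) \<noteq> nu" for g using br[of g "N div g"] False by blast
    have "X m = 0" for m unfolding X_def using br2 by simp
    then have "(\<Sum>m | m dvd N. X m) = 0" by simp
    moreover have "frob N (conj_char N) nu = 0" using frob_conj[OF N] br2 by simp
    ultimately show ?thesis using lhs by simp
  qed
qed

lemma finite_submsets: "finite {A. A \<subseteq># B}"
proof -
  have "{A. A \<subseteq># B} \<subseteq> mset ` {ys. set ys \<subseteq> set_mset B \<and> length ys \<le> size B}"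
  proof
    fix A assume "A \<in> {A. A \<subseteq># B}"
    then have A: "A \<subseteq># B" by simp
    obtain ys where ys: "mset ys = A" using ex_mset by blast
    have "set ys \<subseteq> set_mset B" using A ys by (metis mset_subset_eqD set_mset_mset subsetI)
    moreover have "length ys \<le> size B" using A ys by (metis size_mset size_mset_mono)
    ultimately show "A \<in> mset ` {ys. set ys \<subseteq> set_mset B \<and> length ys \<le> size B}" using ys by blast
  qed
  moreover have "finite (mset ` {ys. set ys \<subseteq> set_mset B \<and> length ys \<le> size B})"
    by (intro finite_imageI finite_lists_length_le) simp
  ultimately show ?thesis by (rule finite_subset)
qed

lemma sub_diff_diff: "A \<subseteq># B \<Longrightarrow> B - (B - A) = A"
  by (auto simp: multiset_eq_iff subseteq_mset_def)

lemma sf_mult_comm: "sf_mult f g = sf_mult g f"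
proof (rule ext)
  fix nu
  have "sf_mult f g nu = (\<Sum>lam\<in>{lam. lam \<subseteq># nu}. f lam * g (nu - lam))" by (simp add: sf_mult_def)
  also have "\<dots> = (\<Sum>lam\<in>{lam. lam \<subseteq># nu}. f (nu - lam) * g (nu - (nu - lam)))"
    by (rule sum.reindex_bij_witness[of _ "\<lambda>lam. nu - lam" "\<lambda>lam. nu - lam"]) (auto simp: sub_diff_diff)
  also have "\<dots> = sf_mult g f nu"
    unfolding sf_mult_def by (intro sum.cong refl) (auto simp: sub_diff_diff mult.commute)
  finally show "sf_mult f g nu = sf_mult g f nu" .
qed

lemma sf_mult_assoc: "sf_mult (sf_mult f g) h = sf_mult f (sf_mult g h)"
proof (rule ext)
  fix nu
  have "sf_mult (sf_mult f g) h nu = (\<Sum>A\<in>{A. A \<subseteq># nu}. \<Sum>B\<in>{B. B \<subseteq># A}. f B * g (A - B) * h (nu - A))"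
    by (simp add: sf_mult_def sum_distrib_right)
  also have "\<dots> = (\<Sum>(A, B)\<in>Sigma {A. A \<subseteq># nu} (\<lambda>A. {B. B \<subseteq># A}). f B * g (A - B) * h (nu - A))"
    by (rule sum.Sigma) (auto simp: finite_submsets)
  also have "\<dots> = (\<Sum>(B, C)\<in>Sigma {B. B \<subseteq># nu} (\<lambda>B. {C. C \<subseteq># nu - B}). f B * g C * h (nu - B - C))"
  proof (rule sum.reindex_bij_witness[of _ "\<lambda>(B, C). (B + C, B)" "\<lambda>(A, B). (B, A - B)"])
    show "\<And>a. a \<in> Sigma {A. A \<subseteq># nu} (\<lambda>A. {B. B \<subseteq># A}) \<Longrightarrow>
          (case case a of (A, B) \<Rightarrow> (B, A - B) of (B, C) \<Rightarrow> (B + C, B)) = a"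
      by (auto simp: multiset_eq_iff subseteq_mset_def)
    show "\<And>a. a \<in> Sigma {A. A \<subseteq># nu} (\<lambda>A. {B. B \<subseteq># A}) \<Longrightarrow>
          (case a of (A, B) \<Rightarrow> (B, A - B)) \<in> Sigma {B. B \<subseteq># nu} (\<lambda>B. {C. C \<subseteq># nu - B})"
      by (auto simp: subseteq_mset_def) (meson le_trans, meson diff_le_mono)
    show "\<And>b. b \<in> Sigma {B. B \<subseteq># nu} (\<lambda>B. {C. C \<subseteq># nu - B}) \<Longrightarrow>
          (case case b of (B, C) \<Rightarrow> (B + C, B) of (A, B) \<Rightarrow> (B, A - B)) = b"
      by auto
    show "\<And>b. b \<in> Sigma {B. B \<subseteq># nu} (\<lambda>B. {C. C \<subseteq># nu - B}) \<Longrightarrow>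
          (case b of (B, C) \<Rightarrow> (B + C, B)) \<in> Sigma {A. A \<subseteq># nu} (\<lambda>A. {B. B \<subseteq># A})"
      by (auto simp: subseteq_mset_def) (metis add.commute le_diff_conv2)
    show "\<And>a. a \<in> Sigma {A. A \<subseteq># nu} (\<lambda>A. {B. B \<subseteq># A}) \<Longrightarrow>
          (case case a of (A, B) \<Rightarrow> (B, A - B) of (B, C) \<Rightarrow> f B * g C * h (nu - B - C)) =
          (case a of (A, B) \<Rightarrow> f B * g (A - B) * h (nu - A))"
      by (auto simp: subseteq_mset_def)
  qed
  also have "\<dots> = (\<Sum>B\<in>{B. B \<subseteq># nu}. \<Sum>C\<in>{C. C \<subseteq># nu - B}. f B * g C * h (nu - B - C))"
    by (rule sum.Sigma[symmetric]) (auto simp: finite_submsets)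
  also have "\<dots> = sf_mult f (sf_mult g h) nu"
    by (simp add: sf_mult_def sum_distrib_left mult.assoc)
  finally show "sf_mult (sf_mult f g) h nu = sf_mult f (sf_mult g h) nu" .
qed

lemma sf_mult_lcomm: "sf_mult f (sf_mult g h) = sf_mult g (sf_mult f h)"
  by (metis sf_mult_assoc sf_mult_comm)

lemma sf_one_mult: "sf_mult sf_one f = f"
proof (rule ext)
  fix nu
  have "sf_mult sf_one f nu = (\<Sum>lam\<in>{lam. lam \<subseteq># nu}. if lam = {#} then f (nu - lam) else 0)"
    unfolding sf_mult_def sf_one_def pw_def by (intro sum.cong) auto
  also have "\<dots> = f nu" using finite_submsets[of nu] by (simp add: sum.delta')
  finally show "sf_mult sf_one f nu = f nu" .
qed

lemma sf_mult_one: "sf_mult f sf_one = f"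
  using sf_one_mult sf_mult_comm by metis

lemma sf_mult_sum: "finite I \<Longrightarrow> sf_mult f (\<lambda>mu. \<Sum>i\<in>I. g i mu) nu = (\<Sum>i\<in>I. sf_mult f (g i) nu)"
  unfolding sf_mult_def by (simp add: sum_distrib_left sum.swap[of _ I])

lemma sf_mult_sub: "sf_mult f (sf_sub g h) = sf_sub (sf_mult f g) (sf_mult f h)"
  unfolding sf_mult_def sf_sub_def by (auto simp: sum_subtractf right_diff_distrib)

lemma sf_sub_mult: "sf_mult (sf_sub g h) f = sf_sub (sf_mult g f) (sf_mult h f)"
  using sf_mult_sub sf_mult_comm by metis

definition low :: "nat \<Rightarrow> sf \<Rightarrow> bool" where
  "low d f \<longleftrightarrow> (\<forall>mu. sum_mset mu < d \<longrightarrow> f mu = 0)"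

lemma low_mult: "low a f \<Longrightarrow> low b g \<Longrightarrow> low (a + b) (sf_mult f g)"
  unfolding low_def sf_mult_def
proof (intro allI impI sum.neutral ballI)
  fix mu lam assume f: "\<forall>mu. sum_mset mu < a \<longrightarrow> f mu = 0" and g: "\<forall>mu. sum_mset mu < b \<longrightarrow> g mu = 0"
    and s: "sum_mset mu < a + b" and lam: "lam \<in> {lam. lam \<subseteq># mu}"
  have "sum_mset mu = sum_mset lam + sum_mset (mu - lam)" using lam
    by (metis mem_Collect_eq subset_mset.add_diff_inverse sum_mset.union)
  then have "sum_mset lam < a \<or> sum_mset (mu - lam) < b" using s by linarith
  then show "f lam * g (mu - lam) = 0" using f g by auto
qed

lemma low_mono: "low a f \<Longrightarrow> b \<le> a \<Longrightarrow> low b f"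
  unfolding low_def by auto

definition mprod :: "nat multiset \<Rightarrow> sf" where
  "mprod M = fold_mset (\<lambda>i acc. sf_mult (pleth_p i Lie) acc) sf_one M"

primrec spow :: "sf \<Rightarrow> nat \<Rightarrow> sf" where
  "spow f 0 = sf_one"
| "spow f (Suc r) = sf_mult f (spow f r)"

lemma cfc: "comp_fun_commute (\<lambda>i acc. sf_mult (pleth_p i Lie) acc)"
  by unfold_locales (auto simp: fun_eq_iff sf_mult_lcomm)

lemma mprod_empty: "mprod {#} = sf_one" by (simp add: mprod_def)

lemma mprod_add: "mprod (add_mset x M) = sf_mult (pleth_p x Lie) (mprod M)"
  unfolding mprod_def by (rule comp_fun_commute.fold_mset_add_mset[OF cfc])

lemma prodlist_mprod: "sf_prod_list (map (\<lambda>i. pleth_p i Lie) xs) = mprod (mset xs)"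
  by (induct xs) (simp_all add: sf_prod_list_def mprod_empty mprod_add)

lemma Q_mprod: "sf_prod_list (map (\<lambda>i. pleth_p i Lie) (sorted_list_of_multiset lam)) = mprod lam"
  by (simp add: prodlist_mprod)

lemma pleth1: "pleth_p 1 g = g"
  by (simp add: pleth_p_def fun_eq_iff)

lemma pleth1': "pleth_p (Suc 0) g = g" using pleth1 by simp

lemma Lie_zero: assumes "sum_mset mu = 0" shows "Lie mu = 0"
proof -
  have "\<not> 0 < sum_mset mu" using assms by linarith
  then show ?thesis by (subst Lie_val) (simp only: \<open>\<not> 0 < sum_mset mu\<close> if_False)
qed

lemma mprod_rep1: "mprod (replicate_mset r 1) = spow Lie r"
  by (induct r) (simp_all add: mprod_empty mprod_add pleth1')

lemma low_Lie: "low 1 Lie"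
  unfolding low_def by (auto intro: Lie_zero)

lemma low_P:
  assumes "1 \<le> i" shows "low i (pleth_p i Lie)"
  unfolding low_def
proof (intro allI impI)
  fix mu assume s: "sum_mset mu < i"
  show "pleth_p i Lie mu = 0"
  proof (cases "\<forall>x\<in>#mu. i dvd x")
    case True
    define mu' where "mu' = image_mset (\<lambda>x. x div i) mu"
    have "mu = image_mset ((*) i) mu'" unfolding mu'_def by (rule mult_div_mset[OF True])
    then have "sum_mset mu = i * sum_mset mu'" using sum_mult_mset by metis
    then have "sum_mset mu' = 0" using s by (cases "sum_mset mu'") auto
    then have "Lie mu' = 0" by (rule Lie_zero)
    then show ?thesis using True assms by (simp add: pleth_p_def mu'_def)
  qed (auto simp: pleth_p_def)
qed

lemma low_one: "low 0 f" by (simp add: low_def)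

lemma low_spow: "low r (spow Lie r)"
proof (induct r)
  case 0 then show ?case by (simp add: low_one)
next
  case (Suc r) then show ?case using low_mult[OF low_Lie Suc] by simp
qed

lemma low_mprod: "0 \<notin># M \<Longrightarrow> low (sum_mset M) (mprod M)"
proof (induct M)
  case empty then show ?case by (simp add: low_one)
next
  case (add x M)
  then have x: "1 \<le> x" by (cases x) auto
  show ?case using low_mult[OF low_P[OF x] add.hyps] add.prems by (simp add: mprod_add)
qed

lemma size_le_sum: "0 \<notin># M \<Longrightarrow> size M \<le> sum_mset M"
proof (induct M)
  case (add x M)
  then have "size M \<le> sum_mset M" "1 \<le> x" by (auto simp: Suc_le_eq)
  then show ?case by simp
qed simp

lemma finite_parts: "finite {lam. is_partition lam \<and> sum_mset lam \<le> s}"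
proof -
  have "{lam. is_partition lam \<and> sum_mset lam \<le> s} \<subseteq> mset ` {ys. set ys \<subseteq> {1..s} \<and> length ys \<le> s}"
  proof
    fix lam assume "lam \<in> {lam. is_partition lam \<and> sum_mset lam \<le> s}"
    then have l: "0 \<notin># lam" "sum_mset lam \<le> s" by (auto simp: is_partition_def)
    obtain ys where ys: "mset ys = lam" using ex_mset by blast
    have "set ys \<subseteq> {1..s}"
    proof
      fix x assume "x \<in> set ys"
      then have "x \<in># lam" using ys by auto
      then have "sum_mset lam = x + sum_mset (lam - {#x#})" by (simp add: sum_mset.remove)
      then have "x \<le> sum_mset lam" by simp
      moreover have "x \<noteq> 0" using l(1) \<open>x \<in># lam\<close> by (metis)
      ultimately show "x \<in> {1..s}" using l by auto
    qed
    moreover have "length ys \<le> s" using size_le_sum[OF l(1)] l(2) ys by auto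
    ultimately show "lam \<in> mset ` {ys. set ys \<subseteq> {1..s} \<and> length ys \<le> s}" using ys by blast
  qed
  moreover have "finite (mset ` {ys. set ys \<subseteq> {1..s} \<and> length ys \<le> s})"
    by (intro finite_imageI finite_lists_length_le) simp
  ultimately show ?thesis by (rule finite_subset)
qed

lemma pleth_Hk:
  assumes k: "1 \<le> k"
  shows "plethysm (Hk k) Lie mu = (\<Sum>r<k. sf_mult (pleth_p (k - r) Lie) (spow Lie r) mu)"
proof -
  define Lam where "Lam = {lam. is_partition lam \<and> sum_mset lam \<le> sum_mset mu}"
  define h where "h r = add_mset (k - r) (replicate_mset r 1)" for r
  have fL: "finite Lam" unfolding Lam_def by (rule finite_parts)
  have "plethysm (Hk k) Lie mu = (\<Sum>lam\<in>Lam. Hk k lam * mprod lam mu)"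
    by (simp add: plethysm_def Lam_def Q_mprod)
  also have "\<dots> = (\<Sum>lam\<in>Lam. \<Sum>r<k. if lam = h r then mprod lam mu else 0)"
    unfolding Hk_def sum_distrib_right by (intro sum.cong refl) (auto simp: pw_def h_def)
  also have "\<dots> = (\<Sum>r<k. \<Sum>lam\<in>Lam. if lam = h r then mprod lam mu else 0)"
    by (rule sum.swap)
  also have "\<dots> = (\<Sum>r<k. if h r \<in> Lam then mprod (h r) mu else 0)"
    using fL by (simp add: sum.delta')
  also have "\<dots> = (\<Sum>r<k. mprod (h r) mu)"
  proof (intro sum.cong refl)
    fix r assume r: "r \<in> {..<k}"
    have part: "is_partition (h r)" using r by (auto simp: is_partition_def h_def)
    have sh: "sum_mset (h r) = k" using r by (simp add: h_def)
    show "(if h r \<in> Lam then mprod (h r) mu else 0) = mprod (h r) mu"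
    proof (cases "h r \<in> Lam")
      case False
      then have "sum_mset mu < sum_mset (h r)" using part sh by (auto simp: Lam_def)
      moreover have "low (sum_mset (h r)) (mprod (h r))"
        using part by (intro low_mprod) (simp add: is_partition_def)
      ultimately show ?thesis using False by (simp add: low_def)
    qed simp
  qed
  also have "\<dots> = (\<Sum>r<k. sf_mult (pleth_p (k - r) Lie) (spow Lie r) mu)"
    using mprod_rep1 by (simp add: h_def mprod_add)
  finally show ?thesis .
qed

definition FF :: "nat \<Rightarrow> nat \<Rightarrow> sf" where
  "FF m r = sf_mult (pleth_p m Lie) (spow Lie r)"

lemma low_FF: "1 \<le> m \<Longrightarrow> low (m + r) (FF m r)"
  unfolding FF_def by (rule low_mult[OF low_P low_spow])

lemma FF_zero: "1 \<le> m \<Longrightarrow> sum_mset mu < m + r \<Longrightarrow> FF m r mu = 0"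
  using low_FF unfolding low_def by blast

lemma S_eq:
  assumes s: "sum_mset mu \<le> N"
  shows "(\<Sum>k. plethysm (Hk (Suc k)) Lie mu) = (\<Sum>m\<in>{1..N}. \<Sum>r\<le>N. FF m r mu)"
proof -
  define s where "s = sum_mset mu"
  have pk: "plethysm (Hk (Suc k)) Lie mu = (\<Sum>r<Suc k. FF (Suc k - r) r mu)" for k
    unfolding FF_def by (rule pleth_Hk) simp
  have "(\<Sum>k. plethysm (Hk (Suc k)) Lie mu) = (\<Sum>k<s. plethysm (Hk (Suc k)) Lie mu)"
  proof (rule suminf_finite)
    fix k assume "k \<notin> {..<s}"
    then have "s < Suc k" by simp
    then show "plethysm (Hk (Suc k)) Lie mu = 0" unfolding pk
      by (intro sum.neutral ballI FF_zero) (auto simp: s_def)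
  qed simp
  also have "\<dots> = (\<Sum>k<s. \<Sum>r<Suc k. FF (Suc k - r) r mu)" by (simp add: pk)
  also have "\<dots> = (\<Sum>(k, r)\<in>Sigma {..<s} (\<lambda>k. {..<Suc k}). FF (Suc k - r) r mu)"
    by (rule sum.Sigma) auto
  also have "\<dots> = (\<Sum>(m, r)\<in>{(m, r). 1 \<le> m \<and> m + r \<le> s}. FF m r mu)"
    by (rule sum.reindex_bij_witness[of _ "\<lambda>(m, r). (m + r - 1, r)" "\<lambda>(k, r). (Suc k - r, r)"]) auto
  also have "\<dots> = (\<Sum>(m, r)\<in>{1..N} \<times> {..N}. FF m r mu)"
  proof (rule sum.mono_neutral_left)
    show "finite ({1..N} \<times> {..N})" by simp
    show "{(m, r). 1 \<le> m \<and> m + r \<le> s} \<subseteq> {1..N} \<times> {..N}" using s by (auto simp: s_def)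
    show "\<forall>i\<in>{1..N} \<times> {..N} - {(m, r). 1 \<le> m \<and> m + r \<le> s}. (case i of (m, r) \<Rightarrow> FF m r mu) = 0"
      by (auto intro!: FF_zero simp: s_def)
  qed
  also have "\<dots> = (\<Sum>m\<in>{1..N}. \<Sum>r\<le>N. FF m r mu)"
    by (rule sum.cartesian_product[symmetric])
  finally show ?thesis .
qed

lemma spow_Suc_sub: "sf_mult (sf_sub sf_one Lie) (spow Lie r) = sf_sub (spow Lie r) (spow Lie (Suc r))"
  by (simp add: sf_sub_mult sf_one_mult)

lemma part2:
  assumes n: "n \<ge> 1"
  shows "frob n (conj_char n) =
    deg_part n (sf_mult (sf_sub sf_one Lie) (\<lambda>nu. \<Sum>k. plethysm (Hk (Suc k)) Lie nu))"
proof (rule ext)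
  fix nu
  show "frob n (conj_char n) nu =
    deg_part n (sf_mult (sf_sub sf_one Lie) (\<lambda>nu. \<Sum>k. plethysm (Hk (Suc k)) Lie nu)) nu"
  proof (cases "sum_mset nu = n")
    case False
    have "{j. j < n \<and> replicate_mset (gcd j n) (n div gcd j n) = nu} = {}"
      using False sum_rep_gcd[of n] n by auto
    then show ?thesis using False frob_conj[OF n] by (simp add: deg_part_def)
  next
    case True
    define N where "N = n"
    define T where "T = (\<lambda>mu. \<Sum>m\<in>{1..N}. \<Sum>r\<le>N. FF m r mu)"
    define U where "U = sf_sub sf_one Lie"
    have "sf_mult U (\<lambda>nu. \<Sum>k. plethysm (Hk (Suc k)) Lie nu) nu = sf_mult U T nu"
      unfolding sf_mult_def
    proof (intro sum.cong refl)
      fix lam assume "lam \<in> {lam. lam \<subseteq># nu}"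
      then have "sum_mset (nu - lam) \<le> N" using True unfolding N_def
        by (metis le_add2 mem_Collect_eq subset_mset.add_diff_inverse sum_mset.union)
      then show "U lam * (\<Sum>k. plethysm (Hk (Suc k)) Lie (nu - lam)) = U lam * T (nu - lam)"
        unfolding T_def by (simp add: S_eq)
    qed
    also have "sf_mult U T nu = (\<Sum>m\<in>{1..N}. \<Sum>r\<le>N. sf_mult U (FF m r) nu)"
      unfolding T_def by (simp add: sf_mult_sum)
    also have "\<dots> = (\<Sum>m\<in>{1..N}. \<Sum>r<Suc N. FF m r nu - FF m (Suc r) nu)"
    proof (intro sum.cong refl)
      fix m r
      have "sf_mult U (FF m r) = sf_mult (pleth_p m Lie) (sf_mult U (spow Lie r))"
        unfolding FF_def by (rule sf_mult_lcomm)
      also have "\<dots> = sf_sub (FF m r) (FF m (Suc r))"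
        unfolding U_def spow_Suc_sub sf_mult_sub FF_def by simp
      finally show "sf_mult U (FF m r) nu = FF m r nu - FF m (Suc r) nu" by (simp add: sf_sub_def)
    qed (simp add: lessThan_Suc_atMost)
    also have "\<dots> = (\<Sum>m\<in>{1..N}. FF m 0 nu - FF m (Suc N) nu)"
      by (intro sum.cong refl) (rule sum_lessThan_telescope')
    also have "\<dots> = (\<Sum>m\<in>{1..N}. pleth_p m Lie nu)"
    proof (intro sum.cong refl)
      fix m assume "m \<in> {1..N}"
      then have "FF m (Suc N) nu = 0" using True by (intro FF_zero) (auto simp: N_def)
      then show "FF m 0 nu - FF m (Suc N) nu = pleth_p m Lie nu" by (simp add: FF_def sf_mult_one)
    qed
    also have "\<dots> = frob N (conj_char N) nu" using core[of N nu] n True by (simp add: N_def)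
    finally show ?thesis using True by (simp add: deg_part_def U_def N_def)
  qed
qed

theorem proposition2p20:
  fixes W :: "nat \<Rightarrow> (nat \<Rightarrow> nat) \<Rightarrow> complex"
  assumes W: "\<forall>n\<ge>1. class_fun n (W n) \<and> frob n (W n) = Hk n"
  shows "(\<forall>n\<ge>1. \<forall>\<sigma>\<in>Sym n.
            W (Suc n) \<sigma> = W n \<sigma> + ind_char (Sym n) (Sym (n - 1)) (W n) \<sigma>)
       \<and> (\<forall>n\<ge>1. frob n (conj_char n) =
            deg_part n (sf_mult (sf_sub sf_one Lie) (\<lambda>nu. \<Sum>k. plethysm (Hk (Suc k)) Lie nu)))"
  using part1[OF W] part2 by blast

end
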